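(* Let $M=M_n\to\infty$ as $n\to\infty$. Assume that (i) $\psi(p_1,\dots,p_r)=\sum_{j=1}^r w_j\varphi(p_j)$ with weights $w_j>0$, where $\varphi$ is decreasing, non-negative on $(0,1/2)$, and one-to-one from $(0,1)$ to $(-\infty,\infty)$; (ii) there exists $r_0\in\{1,\dots,r-1\}$ such that (a) $H_0^{(1)}\cap\dots\cap H_0^{(r_0)}$ holds, $(T_{n,1},\dots,T_{n,r_0})$ converges weakly to a random vector with a continuous distribution function, and $$\sup_{\mathbf{x}\in\mathbb{R}^{r_0}}|\Pr(T_{n,1}^{[1]}\le x_1,\dots,T_{n,r_0}^{[1]}\le x_{r_0}\mid\mathbf{X}_n)-\Pr(T_{n,1}\le x_1,\dots,T_{n,r_0}\le x_{r_0})|\to0\ \text{in probability};$$ (b) for every $j\in\{r_0+1,\dots,r\}$, $H_0^{(j)}$ does not hold and $\Pr(T_{n,j}^{[1]}\ge T_{n,j})\to0$. Then $W_{n,M_n}^{[0]}$ diverges to infinity in probability.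
   Context: Setting: Let $\mathbf{X}_n$ denote the available data. For $j\in\{1,\dots,r\}$, let $T_{n,j}=T_{n,j}(\mathbf{X}_n)$ be real-valued test statistics, large values of $T_{n,j}$ providing evidence against a null hypothesis $H_0^{(j)}$, and $\mathbf{T}_n=(T_{n,1},\dots,T_{n,r})$. Let $\mathbf{V}_n^{[1]},\mathbf{V}_n^{[2]},\dots$ be i.i.d. random vectors representing the additional randomness of a resampling mechanism (independent of the data) and $\mathbf{T}_n^{[i]}=(T_{n,1}^{[i]},\dots,T_{n,r}^{[i]})=\mathbf{T}_n^{[i]}(\mathbf{X}_n,\mathbf{V}_n^{[i]})$, $i\ge1$, bootstrap replicates of $\mathbf{T}_n$; $\mathbf{T}_n^{[0]}=\mathbf{T}_n$. For an integer $M$, $i\in\{0,\dots,M\}$, $j\in\{1,\dots,r\}$: $p_{n,M}(T_{n,j}^{[i]})=\frac{1}{M+1}\{\frac12+\sum_{k=1}^M\mathbf{1}(T_{n,j}^{[k]}\ge T_{n,j}^{[i]})\}$ and $W_{n,M}^{[i]}=\psi\{p_{n,M}(T_{n,1}^{[i]}),\dots,p_{n,M}(T_{n,r}^{[i]})\}$. *)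

theory Defs
  imports "HOL-Probability.Probability"
begin

definition boot_pval :: "nat \<Rightarrow> (nat \<Rightarrow> real) \<Rightarrow> real \<Rightarrow> real" where
  "boot_pval m tb t = (1 / (real m + 1)) * (1 / 2 + (\<Sum>k\<in>{1..m}. if tb k \<ge> t then 1 else 0))"

definition weak_conv_vec :: "(nat \<Rightarrow> (nat \<Rightarrow> real) measure) \<Rightarrow> (nat \<Rightarrow> real) measure \<Rightarrow> bool" where
  "weak_conv_vec mu L \<longleftrightarrow>
     (\<forall>f :: (nat \<Rightarrow> real) \<Rightarrow> real.
        continuous_on UNIV f \<longrightarrow> bounded (range f) \<longrightarrow> f \<in> borel_measurable L \<longrightarrow>
        (\<lambda>n. integral\<^sup>L (mu n) f) \<longlonglongrightarrow> integral\<^sup>L L f)"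

text \<open>Convergence in probability to 0 of D n (D n defined on the probability space P n),
  phrased with outer probabilities so that no measurability of D n is presupposed.\<close>
definition tends_to_zero_in_prob :: "(nat \<Rightarrow> 'x measure) \<Rightarrow> (nat \<Rightarrow> 'x \<Rightarrow> real) \<Rightarrow> bool" where
  "tends_to_zero_in_prob P D \<longleftrightarrow>
     (\<forall>\<epsilon>>0. \<exists>A. (\<forall>n. A n \<in> sets (P n) \<and> {x \<in> space (P n). \<bar>D n x\<bar> > \<epsilon>} \<subseteq> A n)
                 \<and> (\<lambda>n. measure (P n) (A n)) \<longlonglongrightarrow> 0)"

end

theory Submission
  imports Defs
begin

lemma pim_single_measure:
  assumes Q: "prob_space Q" and I: "finite I" and S: "S \<in> sets Q" and k: "k \<in> I"
  shows "measure (PiM I (\<lambda>_. Q)) {vs \<in> space (PiM I (\<lambda>_. Q)). vs k \<in> S} = measure Q S"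
proof -
  interpret product_prob_space "\<lambda>_. Q" I
    using Q by (simp add: product_prob_space_def product_prob_space_axioms_def product_sigma_finite_def prob_space_imp_sigma_finite)
  show ?thesis
    using emeasure_PiM_Collect_single[OF k S] by (simp add: measure_def)
qed

lemma pim_count_markov:
  assumes Q: "prob_space Q" and I: "finite I" and S: "S \<in> sets Q" and c: "c > 0"
  shows "measure (PiM I (\<lambda>_. Q)) {vs \<in> space (PiM I (\<lambda>_. Q)). (\<Sum>k\<in>I. if vs k \<in> S then 1 else 0::real) \<ge> c}
     \<le> real (card I) * measure Q S / c"
proof -
  interpret PQ: product_prob_space "\<lambda>_. Q" I
    using Q by (simp add: product_prob_space_def product_prob_space_axioms_def product_sigma_finite_def prob_space_imp_sigma_finite)
  let ?M = "PiM I (\<lambda>_. Q)"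
  have meas: "(\<lambda>vs. if vs k \<in> S then 1 else 0::real) \<in> borel_measurable ?M" if "k \<in> I" for k
    using that S by measurable
  have int: "integrable ?M (\<lambda>vs. if vs k \<in> S then 1 else 0::real)" if "k \<in> I" for k
    by (rule PQ.P.integrable_const_bound[where B=1]) (auto simp: meas that)
  have intk: "(\<integral>vs. (if vs k \<in> S then 1 else 0::real) \<partial>?M) = measure Q S" if k: "k \<in> I" for k
  proof -
    have "(\<integral>vs. (if vs k \<in> S then 1 else 0::real) \<partial>?M) = (\<integral>vs. indicator {vs \<in> space ?M. vs k \<in> S} vs \<partial>?M)"
      by (rule Bochner_Integration.integral_cong) (auto simp: indicator_def)
    also have "\<dots> = measure ?M {vs \<in> space ?M. vs k \<in> S}"
      by (simp add: Int_absorb2)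
    also have "\<dots> = measure Q S" using pim_single_measure[OF Q I S k] .
    finally show ?thesis .
  qed
  have "measure ?M {vs \<in> space ?M. (\<Sum>k\<in>I. if vs k \<in> S then 1 else 0::real) \<ge> c}
     \<le> (\<integral>vs. (\<Sum>k\<in>I. if vs k \<in> S then 1 else 0::real) \<partial>?M) / c"
    by (rule integral_Markov_inequality_measure) (auto simp: int c intro!: sum_nonneg)
  also have "(\<integral>vs. (\<Sum>k\<in>I. if vs k \<in> S then 1 else 0::real) \<partial>?M) = real (card I) * measure Q S"
    using int intk by (simp add: Bochner_Integration.integral_sum)
  finally show ?thesis .
qed

lemma pim_indep_coords:
  assumes Q: "prob_space Q" and I: "finite I" "I \<noteq> {}"
  shows "prob_space.indep_vars (PiM I (\<lambda>_. Q)) (\<lambda>_. Q) (\<lambda>i \<omega>. \<omega> i) I"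
proof -
  interpret PQ: product_prob_space "\<lambda>_. Q" I
    using Q by (simp add: product_prob_space_def product_prob_space_axioms_def product_sigma_finite_def prob_space_imp_sigma_finite)
  have "distr (PiM I (\<lambda>_. Q)) (PiM I (\<lambda>_. Q)) (\<lambda>x. \<lambda>i\<in>I. x i) = distr (PiM I (\<lambda>_. Q)) (PiM I (\<lambda>_. Q)) (\<lambda>x. x)"
    by (rule distr_cong) (auto simp: space_PiM PiE_def extensional_restrict)
  also have "\<dots> = PiM I (\<lambda>_. Q)" by simp
  also have "\<dots> = PiM I (\<lambda>i. distr (PiM I (\<lambda>_. Q)) Q (\<lambda>\<omega>. \<omega> i))"
    by (intro PiM_cong refl) (simp add: PQ.PiM_component)
  finally show ?thesis
    by (subst PQ.P.indep_vars_iff_distr_eq_PiM'[OF I(2)]) auto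
qed

lemma pim_count_hoeffding:
  assumes Q: "prob_space Q" and I: "finite I" "I \<noteq> {}" and S: "S \<in> sets Q" and e: "e \<ge> 0"
  shows "measure (PiM I (\<lambda>_. Q)) {vs \<in> space (PiM I (\<lambda>_. Q)). (\<Sum>k\<in>I. if vs k \<in> S then 1 else 0::real) \<ge> real (card I) * measure Q S + e}
     \<le> exp (- 2 * e\<^sup>2 / real (card I))"
proof -
  interpret PQ: product_prob_space "\<lambda>_. Q" I
    using Q by (simp add: product_prob_space_def product_prob_space_axioms_def product_sigma_finite_def prob_space_imp_sigma_finite)
  let ?M = "PiM I (\<lambda>_. Q)"
  let ?X = "\<lambda>k vs. if vs k \<in> S then 1 else 0::real"
  have ind: "PQ.P.indep_vars (\<lambda>_. borel) (\<lambda>i x. (\<lambda>v. if v \<in> S then 1 else 0::real) ((\<lambda>i \<omega>. \<omega> i) i x)) I"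
    by (rule PQ.P.indep_vars_compose2[OF pim_indep_coords[OF Q I]]) (use S in measurable)
  have meas: "?X k \<in> borel_measurable ?M" if "k \<in> I" for k
    using that S by measurable
  have intk: "PQ.P.expectation (?X k) = measure Q S" if k: "k \<in> I" for k
  proof -
    have "(\<integral>vs. ?X k vs \<partial>?M) = (\<integral>vs. indicator {vs \<in> space ?M. vs k \<in> S} vs \<partial>?M)"
      by (rule Bochner_Integration.integral_cong) (auto simp: indicator_def)
    also have "\<dots> = measure ?M {vs \<in> space ?M. vs k \<in> S}"
      by (simp add: Int_absorb2)
    also have "\<dots> = measure Q S" using pim_single_measure[OF Q I(1) S k] .
    finally show ?thesis .
  qed
  interpret H: Hoeffding_ineq ?M I ?X "\<lambda>_. 0" "\<lambda>_. 1" "real (card I) * measure Q S"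
  proof unfold_locales
    show "finite I" by fact
    show "PQ.P.indep_vars (\<lambda>_. borel) ?X I" using ind by simp
    show "AE x in ?M. ?X i x \<in> {0..1}" if "i \<in> I" for i by auto
    show "real (card I) * measure Q S \<equiv> \<Sum>i\<in>I. PQ.P.expectation (?X i)"
      using intk by simp
  qed
  have "(\<Sum>i\<in>I. (1 - 0::real)\<^sup>2) = real (card I)" by simp
  moreover have "(\<Sum>i\<in>I. (1 - 0::real)\<^sup>2) > 0" using I by (simp add: card_gt_0_iff)
  ultimately show ?thesis using H.Hoeffding_ineq_ge[OF e] by simp
qed

lemma fubini_bound:
  assumes P: "prob_space P" and R: "prob_space R" and E: "E \<in> sets (P \<Otimes>\<^sub>M R)"
    and B: "B \<in> sets P" and d: "d \<ge> 0"
    and bnd: "\<And>x. x \<in> space P \<Longrightarrow> x \<notin> B \<Longrightarrow> measure R (Pair x -` E) \<le> d"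
  shows "measure (P \<Otimes>\<^sub>M R) E \<le> measure P B + d"
proof -
  interpret R: prob_space R by fact
  interpret P: prob_space P by fact
  interpret PR: prob_space "P \<Otimes>\<^sub>M R" by (intro prob_space_pair P R)
  have "emeasure (P \<Otimes>\<^sub>M R) E = (\<integral>\<^sup>+x. emeasure R (Pair x -` E) \<partial>P)"
    by (rule R.emeasure_pair_measure_alt[OF E])
  also have "\<dots> \<le> (\<integral>\<^sup>+x. (indicator B x + ennreal d) \<partial>P)"
  proof (rule nn_integral_mono)
    fix x assume x: "x \<in> space P"
    show "emeasure R (Pair x -` E) \<le> indicator B x + ennreal d"
    proof (cases "x \<in> B")
      case True
      have "emeasure R (Pair x -` E) \<le> 1" by (rule R.emeasure_le_1)
      also have "\<dots> \<le> indicator B x + ennreal d" using True by simp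
      finally show ?thesis .
    next
      case False
      have "emeasure R (Pair x -` E) = ennreal (measure R (Pair x -` E))"
        by (simp add: R.emeasure_eq_measure)
      also have "\<dots> \<le> ennreal d" using bnd[OF x False] by (rule ennreal_leI)
      finally show ?thesis using False by simp
    qed
  qed
  also have "\<dots> = emeasure P B + ennreal d"
    using B by (subst nn_integral_add) (auto simp: P.emeasure_space_1)
  also have "\<dots> = ennreal (measure P B + d)"
    using d by (simp add: P.emeasure_eq_measure ennreal_plus)
  finally have "ennreal (measure (P \<Otimes>\<^sub>M R) E) \<le> ennreal (measure P B + d)"
    by (simp add: PR.emeasure_eq_measure)
  then show ?thesis
    using d by (subst (asm) ennreal_le_iff) auto
qed

lemma fubini_bound2:
  assumes P: "prob_space P" and R: "prob_space R" and Q: "prob_space Q"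
    and E: "E \<in> sets (P \<Otimes>\<^sub>M R)" and S: "S \<in> sets (P \<Otimes>\<^sub>M Q)" and C: "C \<ge> 0"
    and bnd: "\<And>x. x \<in> space P \<Longrightarrow> measure R (Pair x -` E) \<le> C * measure Q (Pair x -` S)"
  shows "measure (P \<Otimes>\<^sub>M R) E \<le> C * measure (P \<Otimes>\<^sub>M Q) S"
proof -
  interpret R: prob_space R by fact
  interpret Q: prob_space Q by fact
  interpret P: prob_space P by fact
  interpret PR: prob_space "P \<Otimes>\<^sub>M R" by (intro prob_space_pair P R)
  interpret PQ: prob_space "P \<Otimes>\<^sub>M Q" by (intro prob_space_pair P Q)
  have "emeasure (P \<Otimes>\<^sub>M R) E = (\<integral>\<^sup>+x. emeasure R (Pair x -` E) \<partial>P)"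
    by (rule R.emeasure_pair_measure_alt[OF E])
  also have "\<dots> \<le> (\<integral>\<^sup>+x. ennreal C * emeasure Q (Pair x -` S) \<partial>P)"
  proof (rule nn_integral_mono)
    fix x assume x: "x \<in> space P"
    have "emeasure R (Pair x -` E) = ennreal (measure R (Pair x -` E))"
      by (simp add: R.emeasure_eq_measure)
    also have "\<dots> \<le> ennreal (C * measure Q (Pair x -` S))" using bnd[OF x] by (rule ennreal_leI)
    also have "\<dots> = ennreal C * emeasure Q (Pair x -` S)"
      using C by (simp add: Q.emeasure_eq_measure ennreal_mult)
    finally show "emeasure R (Pair x -` E) \<le> ennreal C * emeasure Q (Pair x -` S)" .
  qed
  also have "\<dots> = ennreal C * (\<integral>\<^sup>+x. emeasure Q (Pair x -` S) \<partial>P)"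
    by (rule nn_integral_cmult) (rule Q.measurable_emeasure_Pair[OF S])
  also have "\<dots> = ennreal C * emeasure (P \<Otimes>\<^sub>M Q) S"
    by (simp add: Q.emeasure_pair_measure_alt[OF S])
  also have "\<dots> = ennreal (C * measure (P \<Otimes>\<^sub>M Q) S)"
    using C by (simp add: PQ.emeasure_eq_measure ennreal_mult)
  finally show ?thesis
    using C by (simp add: PR.emeasure_eq_measure ennreal_le_iff)
qed

lemma boot_pval_gt_iff:
  "boot_pval m tb t > c \<longleftrightarrow> (\<Sum>k\<in>{1..m}. if tb k \<ge> t then 1 else 0::real) > c * (real m + 1) - 1/2"
proof -
  have pos: "real m + 1 > 0" by simp
  show ?thesis unfolding boot_pval_def
    using pos by (simp add: field_simps)
qed

lemma boot_pval_range: "boot_pval m tb t > 0" "boot_pval m tb t < 1"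
proof -
  have "(\<Sum>k\<in>{1..m}. if tb k \<ge> t then 1 else 0::real) \<le> (\<Sum>k\<in>{1..m}. 1)"
    by (rule sum_mono) auto
  then have le: "(\<Sum>k\<in>{1..m}. if tb k \<ge> t then 1 else 0::real) \<le> real m" by simp
  have ge: "(\<Sum>k\<in>{1..m}. if tb k \<ge> t then 1 else 0::real) \<ge> 0" by (rule sum_nonneg) auto
  show "boot_pval m tb t > 0" unfolding boot_pval_def using ge by (simp add: field_simps)
  show "boot_pval m tb t < 1" unfolding boot_pval_def using le by (simp add: field_simps)
qed

lemma Eset_meas:
  fixes T :: "'x \<Rightarrow> real" and Tb :: "'x \<Rightarrow> 'v \<Rightarrow> real"
  assumes T: "T \<in> borel_measurable P" and Tb: "(\<lambda>(x, v). Tb x v) \<in> borel_measurable (P \<Otimes>\<^sub>M Q)"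
  shows "(\<lambda>(x, vs). (\<Sum>k\<in>{1..m}. if Tb x (vs k) \<ge> T x then 1 else 0::real))
          \<in> borel_measurable (P \<Otimes>\<^sub>M PiM {1..m} (\<lambda>_. Q))"
proof -
  have "(\<lambda>(x, vs). Tb x (vs k)) \<in> borel_measurable (P \<Otimes>\<^sub>M PiM {1..m} (\<lambda>_. Q))" if "k \<in> {1..m}" for k
  proof -
    have "(\<lambda>(x, vs). (x, vs k)) \<in> measurable (P \<Otimes>\<^sub>M PiM {1..m} (\<lambda>_. Q)) (P \<Otimes>\<^sub>M Q)"
      using that by measurable
    from measurable_comp[OF this Tb] show ?thesis by (simp add: comp_def case_prod_beta)
  qed
  then have h: "(\<lambda>p. Tb (fst p) (snd p k)) \<in> borel_measurable (P \<Otimes>\<^sub>M PiM {1..m} (\<lambda>_. Q))"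
    if "k \<in> {1..m}" for k using that by (simp add: case_prod_beta)
  have h2: "(\<lambda>p. T (fst p)) \<in> borel_measurable (P \<Otimes>\<^sub>M PiM {1..m} (\<lambda>_. Q))"
    using T by measurable
  have "(\<lambda>p. if T (fst p) \<le> Tb (fst p) (snd p k) then 1 else 0::real) \<in> borel_measurable (P \<Otimes>\<^sub>M PiM {1..m} (\<lambda>_. Q))"
    if "k \<in> {1..m}" for k
  proof (intro measurable_If borel_measurable_const)
    show "{p \<in> space (P \<Otimes>\<^sub>M PiM {1..m} (\<lambda>_. Q)). T (fst p) \<le> Tb (fst p) (snd p k)} \<in> sets (P \<Otimes>\<^sub>M PiM {1..m} (\<lambda>_. Q))"
      using h2 h[OF that] by (intro borel_measurable_le) auto
  qed
  then show ?thesis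
    by (simp add: case_prod_beta)
qed

lemma section_meas:
  fixes T :: "'x \<Rightarrow> real" and Tb :: "'x \<Rightarrow> 'v \<Rightarrow> real"
  assumes Tb: "(\<lambda>(x, v). Tb x v) \<in> borel_measurable (P \<Otimes>\<^sub>M Q)" and x: "x \<in> space P"
  shows "{v \<in> space Q. Tb x v \<ge> t} \<in> sets Q" "{v \<in> space Q. Tb x v \<le> t} \<in> sets Q"
    "Tb x \<in> borel_measurable Q"
proof -
  have m: "Tb x \<in> borel_measurable Q"
    using measurable_Pair2[OF Tb x] by simp
  then show "Tb x \<in> borel_measurable Q" .
  show "{v \<in> space Q. Tb x v \<ge> t} \<in> sets Q" "{v \<in> space Q. Tb x v \<le> t} \<in> sets Q"
    using m by measurable
qed

lemma alt_one_n:
  fixes T :: "'x \<Rightarrow> real" and Tb :: "'x \<Rightarrow> 'v \<Rightarrow> real"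
  assumes P: "prob_space P" and Q: "prob_space Q" and T: "T \<in> borel_measurable P"
    and Tb: "(\<lambda>(x, v). Tb x v) \<in> borel_measurable (P \<Otimes>\<^sub>M Q)"
    and d: "c * (real m + 1) - 1/2 > 0"
  shows "measure (P \<Otimes>\<^sub>M PiM {1..m} (\<lambda>_. Q))
      {(x, vs) \<in> space (P \<Otimes>\<^sub>M PiM {1..m} (\<lambda>_. Q)). boot_pval m (\<lambda>k. Tb x (vs k)) (T x) > c}
    \<le> real m / (c * (real m + 1) - 1/2) *
      measure (P \<Otimes>\<^sub>M Q) {(x, v) \<in> space (P \<Otimes>\<^sub>M Q). Tb x v \<ge> T x}"
proof -
  let ?R = "PiM {1..m} (\<lambda>_. Q)"
  let ?d = "c * (real m + 1) - 1/2"
  interpret PQ: product_prob_space "\<lambda>_. Q" "{1..m}"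
    using Q by (simp add: product_prob_space_def product_prob_space_axioms_def product_sigma_finite_def prob_space_imp_sigma_finite)
  have R: "prob_space ?R" by (rule PQ.P.prob_space_axioms)
  let ?E = "{(x, vs) \<in> space (P \<Otimes>\<^sub>M ?R). boot_pval m (\<lambda>k. Tb x (vs k)) (T x) > c}"
  let ?S = "{(x, v) \<in> space (P \<Otimes>\<^sub>M Q). Tb x v \<ge> T x}"
  have cntm: "(\<lambda>(x, vs). (\<Sum>k\<in>{1..m}. if Tb x (vs k) \<ge> T x then 1 else 0::real)) \<in> borel_measurable (P \<Otimes>\<^sub>M ?R)"
    by (rule Eset_meas[OF T Tb])
  have Eeq: "?E = {p \<in> space (P \<Otimes>\<^sub>M ?R). (\<lambda>(x, vs). (\<Sum>k\<in>{1..m}. if Tb x (vs k) \<ge> T x then 1 else 0::real)) p > ?d}"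
    by (auto simp: boot_pval_gt_iff)
  have E: "?E \<in> sets (P \<Otimes>\<^sub>M ?R)"
    unfolding Eeq using cntm by measurable
  have Tf: "(\<lambda>p. T (fst p)) \<in> borel_measurable (P \<Otimes>\<^sub>M Q)" using T by measurable
  have Tb': "(\<lambda>p. Tb (fst p) (snd p)) \<in> borel_measurable (P \<Otimes>\<^sub>M Q)" using Tb by (simp add: case_prod_beta)
  have S: "?S \<in> sets (P \<Otimes>\<^sub>M Q)"
  proof -
    have "?S = {p \<in> space (P \<Otimes>\<^sub>M Q). T (fst p) \<le> Tb (fst p) (snd p)}" by auto
    also have "\<dots> \<in> sets (P \<Otimes>\<^sub>M Q)" using Tf Tb' by (intro borel_measurable_le) auto
    finally show ?thesis .
  qed
  show ?thesis
  proof (rule fubini_bound2[OF P R Q E S])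
    show "0 \<le> real m / ?d" using d by simp
    fix x assume x: "x \<in> space P"
    let ?Sx = "{v \<in> space Q. Tb x v \<ge> T x}"
    have Sx: "?Sx \<in> sets Q" by (rule section_meas(1)[OF Tb x])
    have sec1: "Pair x -` ?E = {vs \<in> space ?R. (\<Sum>k\<in>{1..m}. if vs k \<in> ?Sx then 1 else 0::real) > ?d}"
    proof -
      have "(\<Sum>k\<in>{1..m}. if vs k \<in> ?Sx then 1 else 0::real) = (\<Sum>k\<in>{1..m}. if Tb x (vs k) \<ge> T x then 1 else 0::real)"
        if "vs \<in> space ?R" for vs
        using that by (intro sum.cong refl) (auto simp: space_PiM)
      then show ?thesis using x
        by (auto simp: boot_pval_gt_iff space_pair_measure)
    qed
    have sec2: "Pair x -` ?S = ?Sx" using x by (auto simp: space_pair_measure)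
    have "measure ?R (Pair x -` ?E) \<le> measure ?R {vs \<in> space ?R. (\<Sum>k\<in>{1..m}. if vs k \<in> ?Sx then 1 else 0::real) \<ge> ?d}"
      unfolding sec1 using Sx by (intro PQ.P.finite_measure_mono) auto
    also have "\<dots> \<le> real (card {1..m}) * measure Q ?Sx / ?d"
      by (rule pim_count_markov[OF Q _ Sx d]) simp
    finally show "measure ?R (Pair x -` ?E) \<le> real m / ?d * measure Q (Pair x -` ?S)"
      unfolding sec2 by simp
  qed
qed

lemma null_one_n:
  fixes T :: "'x \<Rightarrow> real" and Tb :: "'x \<Rightarrow> 'v \<Rightarrow> real"
  assumes P: "prob_space P" and Q: "prob_space Q" and T: "T \<in> borel_measurable P"
    and Tb: "(\<lambda>(x, v). Tb x v) \<in> borel_measurable (P \<Otimes>\<^sub>M Q)"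
    and B: "B \<in> sets P" and m: "m \<ge> 1"
    and e: "c * (real m + 1) - 1/2 - real m * b \<ge> 0"
    and qb: "\<And>x. x \<in> space P \<Longrightarrow> x \<notin> B \<Longrightarrow> measure Q {v \<in> space Q. Tb x v \<ge> T x} \<le> b"
  shows "measure (P \<Otimes>\<^sub>M PiM {1..m} (\<lambda>_. Q))
      {(x, vs) \<in> space (P \<Otimes>\<^sub>M PiM {1..m} (\<lambda>_. Q)). boot_pval m (\<lambda>k. Tb x (vs k)) (T x) > c}
    \<le> measure P B + exp (- 2 * (c * (real m + 1) - 1/2 - real m * b)\<^sup>2 / real m)"
proof -
  let ?R = "PiM {1..m} (\<lambda>_. Q)"
  let ?d = "c * (real m + 1) - 1/2"
  let ?e = "c * (real m + 1) - 1/2 - real m * b"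
  interpret PQ: product_prob_space "\<lambda>_. Q" "{1..m}"
    using Q by (simp add: product_prob_space_def product_prob_space_axioms_def product_sigma_finite_def prob_space_imp_sigma_finite)
  have R: "prob_space ?R" by (rule PQ.P.prob_space_axioms)
  let ?E = "{(x, vs) \<in> space (P \<Otimes>\<^sub>M ?R). boot_pval m (\<lambda>k. Tb x (vs k)) (T x) > c}"
  have cntm: "(\<lambda>(x, vs). (\<Sum>k\<in>{1..m}. if Tb x (vs k) \<ge> T x then 1 else 0::real)) \<in> borel_measurable (P \<Otimes>\<^sub>M ?R)"
    by (rule Eset_meas[OF T Tb])
  have Eeq: "?E = {p \<in> space (P \<Otimes>\<^sub>M ?R). (\<lambda>(x, vs). (\<Sum>k\<in>{1..m}. if Tb x (vs k) \<ge> T x then 1 else 0::real)) p > ?d}"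
    by (auto simp: boot_pval_gt_iff)
  have E: "?E \<in> sets (P \<Otimes>\<^sub>M ?R)"
    unfolding Eeq using cntm by measurable
  show ?thesis
  proof (rule fubini_bound[OF P R E B])
    show "0 \<le> exp (- 2 * ?e\<^sup>2 / real m)" by simp
    fix x assume x: "x \<in> space P" and xB: "x \<notin> B"
    let ?Sx = "{v \<in> space Q. Tb x v \<ge> T x}"
    let ?q = "measure Q ?Sx"
    have Sx: "?Sx \<in> sets Q" by (rule section_meas(1)[OF Tb x])
    have sec1: "Pair x -` ?E = {vs \<in> space ?R. (\<Sum>k\<in>{1..m}. if vs k \<in> ?Sx then 1 else 0::real) > ?d}"
    proof -
      have "(\<Sum>k\<in>{1..m}. if vs k \<in> ?Sx then 1 else 0::real) = (\<Sum>k\<in>{1..m}. if Tb x (vs k) \<ge> T x then 1 else 0::real)"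
        if "vs \<in> space ?R" for vs
        using that by (intro sum.cong refl) (auto simp: space_PiM)
      then show ?thesis using x
        by (auto simp: boot_pval_gt_iff space_pair_measure)
    qed
    have q: "?q \<le> b" by (rule qb[OF x xB])
    have e': "?e \<le> ?d - real m * ?q" using q by (simp add: mult_left_mono)
    have "measure ?R (Pair x -` ?E) \<le> measure ?R {vs \<in> space ?R. (\<Sum>k\<in>{1..m}. if vs k \<in> ?Sx then 1 else 0::real) \<ge> real (card {1..m}) * ?q + (?d - real m * ?q)}"
      unfolding sec1 using Sx by (intro PQ.P.finite_measure_mono) auto
    also have "\<dots> \<le> exp (- 2 * (?d - real m * ?q)\<^sup>2 / real (card {1..m}))"
    proof (rule pim_count_hoeffding[OF Q _ _ Sx])
      show "0 \<le> ?d - real m * ?q" using e e' by linarith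
    qed (use m in auto)
    also have "\<dots> \<le> exp (- 2 * ?e\<^sup>2 / real m)"
    proof -
      have "?e\<^sup>2 \<le> (?d - real m * ?q)\<^sup>2" using e e' by (intro power_mono) auto
      then show ?thesis using m by (simp add: divide_right_mono)
    qed
    finally show "measure ?R (Pair x -` ?E) \<le> exp (- 2 * ?e\<^sup>2 / real m)" .
  qed
qed

lemma tail_to_zero:
  fixes f :: "'a \<Rightarrow> real"
  assumes M: "finite_measure M" and f: "f \<in> borel_measurable M"
  shows "(\<lambda>N. measure M {x \<in> space M. f x > real N}) \<longlonglongrightarrow> 0"
    and "(\<lambda>N. measure M {x \<in> space M. f x \<le> - real N}) \<longlonglongrightarrow> 0"
proof -
  interpret finite_measure M by fact
  have "(\<lambda>N. measure M {x \<in> space M. f x > real N}) \<longlonglongrightarrow> measure M (\<Inter>N. {x \<in> space M. f x > real N})"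
    by (rule finite_Lim_measure_decseq) (use f in \<open>auto simp: decseq_def intro: order.strict_trans1\<close>)
  moreover have "(\<Inter>N. {x \<in> space M. f x > real N}) = {}"
  proof -
    have False if "\<forall>N. f x > real N" for x
    proof -
      obtain N where "f x < real N" using reals_Archimedean2 by blast
      with that show False by (meson less_asym)
    qed
    then show ?thesis by auto
  qed
  ultimately show "(\<lambda>N. measure M {x \<in> space M. f x > real N}) \<longlonglongrightarrow> 0" by simp
  have "(\<lambda>N. measure M {x \<in> space M. f x \<le> - real N}) \<longlonglongrightarrow> measure M (\<Inter>N. {x \<in> space M. f x \<le> - real N})"
    by (rule finite_Lim_measure_decseq) (use f in \<open>auto simp: decseq_def intro: order.trans\<close>)
  moreover have "(\<Inter>N. {x \<in> space M. f x \<le> - real N}) = {}"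
  proof -
    have False if "\<forall>N. f x \<le> - real N" for x
    proof -
      obtain N where "- f x < real N" using reals_Archimedean2 by blast
      with that show False by (meson le_minus_iff not_less)
    qed
    then show ?thesis by auto
  qed
  ultimately show "(\<lambda>N. measure M {x \<in> space M. f x \<le> - real N}) \<longlonglongrightarrow> 0" by simp
qed

lemma comp_meas: "k \<in> I \<Longrightarrow> (\<lambda>z. z k) \<in> borel_measurable (PiM I (\<lambda>_. borel))"
  by (rule measurable_component_singleton)

lemma PiM_sets_basic:
  fixes r0 :: nat
  shows
  "{z \<in> space (PiM {1..r0} (\<lambda>_. borel)). \<forall>k\<in>{1..r0}. z k \<le> (y k::real)} \<in> sets (PiM {1..r0} (\<lambda>_. borel))"
  "{z \<in> space (PiM {1..r0} (\<lambda>_. borel)). \<exists>k\<in>{1..r0}. z k > (y k::real)} \<in> sets (PiM {1..r0} (\<lambda>_. borel))"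
  "(\<lambda>z. \<Sum>k\<in>{1..r0}. \<bar>z k::real\<bar>) \<in> borel_measurable (PiM {1..r0} (\<lambda>_. borel))"
proof -
  show "{z \<in> space (PiM {1..r0} (\<lambda>_. borel)). \<forall>k\<in>{1..r0}. z k \<le> (y k::real)} \<in> sets (PiM {1..r0} (\<lambda>_. borel))"
    by (intro sets.sets_Collect_finite_All borel_measurable_le comp_meas borel_measurable_const) auto
  show "{z \<in> space (PiM {1..r0} (\<lambda>_. borel)). \<exists>k\<in>{1..r0}. z k > (y k::real)} \<in> sets (PiM {1..r0} (\<lambda>_. borel))"
    by (intro sets.sets_Collect_finite_Ex borel_measurable_less comp_meas borel_measurable_const) auto
  show "(\<lambda>z. \<Sum>k\<in>{1..r0}. \<bar>z k::real\<bar>) \<in> borel_measurable (PiM {1..r0} (\<lambda>_. borel))"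
    by (intro borel_measurable_sum borel_measurable_abs comp_meas) auto
qed

lemma L_lemma:
  fixes r0 j :: nat and L :: "(nat \<Rightarrow> real) measure" and \<epsilon> :: real
  assumes L_prob: "prob_space L"
    and L_sets: "sets L = sets (PiM {1..r0} (\<lambda>_. borel))"
    and L_cont: "continuous_on UNIV
          (\<lambda>y :: nat \<Rightarrow> real. measure L {z \<in> space L. \<forall>j\<in>{1..r0}. z j \<le> y j})"
    and j: "j \<in> {1..r0}" and e: "0 < \<epsilon>" "\<epsilon> \<le> 1"
  shows "\<exists>s0 Y h. 0 < h \<and>
     measure L {z \<in> space L. \<forall>k\<in>{1..r0}. z k \<le> (if k = j then s0 - h else Y)} > \<epsilon> / 4 \<and>
     measure L {z \<in> space L. z j \<le> s0 + h} < 3 * \<epsilon> / 4"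
proof -
  interpret L: prob_space L by fact
  have spL: "space L = space (PiM {1..r0} (\<lambda>_. borel::real measure))"
    by (rule sets_eq_imp_space_eq[OF L_sets])
  have mj: "(\<lambda>z. z j) \<in> borel_measurable L"
    by (subst measurable_cong_sets[OF L_sets refl]) (rule comp_meas[OF j])
  have msum: "(\<lambda>z. \<Sum>k\<in>{1..r0}. \<bar>z k\<bar>) \<in> borel_measurable L"
    by (subst measurable_cong_sets[OF L_sets refl]) (rule PiM_sets_basic(3))
  have setA: "{z \<in> space L. \<forall>k\<in>{1..r0}. z k \<le> y k} \<in> sets L" for y
    using PiM_sets_basic(1)[where y=y] unfolding L_sets spL .
  have setT: "{z \<in> space L. \<exists>k\<in>{1..r0}. z k > y k} \<in> sets L" for y
    using PiM_sets_basic(2)[where y=y] unfolding L_sets spL .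
  have setj1: "{z \<in> space L. z j \<le> t} \<in> sets L" for t using mj by measurable
  have setj2: "{z \<in> space L. z j > t} \<in> sets L" for t using mj by measurable
  define JL where "JL y = measure L {z \<in> space L. \<forall>k\<in>{1..r0}. z k \<le> y k}" for y
  have eps8: "\<epsilon> / 8 > 0" using e by simp
  obtain N1 where N1: "measure L {z \<in> space L. (\<Sum>k\<in>{1..r0}. \<bar>z k\<bar>) > real N1} < \<epsilon> / 8"
    using order_tendstoD(2)[OF tail_to_zero(1)[OF L.finite_measure_axioms msum] eps8]
    by (auto simp: eventually_sequentially)
  define Y where "Y = real N1"
  have tailY: "measure L {z \<in> space L. \<exists>k\<in>{1..r0}. z k > Y} < \<epsilon> / 8"
  proof -
    have "{z \<in> space L. \<exists>k\<in>{1..r0}. z k > Y} \<subseteq> {z \<in> space L. (\<Sum>k\<in>{1..r0}. \<bar>z k\<bar>) > real N1}"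
    proof safe
      fix z k assume "z \<in> space L" "k \<in> {1..r0}" "Y < z k"
      moreover have "z k \<le> (\<Sum>k\<in>{1..r0}. \<bar>z k\<bar>)"
      proof -
        have "\<bar>z k\<bar> \<le> (\<Sum>k\<in>{1..r0}. \<bar>z k\<bar>)"
          using \<open>k \<in> {1..r0}\<close> by (intro member_le_sum) auto
        then show ?thesis by linarith
      qed
      ultimately show "real N1 < (\<Sum>k\<in>{1..r0}. \<bar>z k\<bar>)" by (simp add: Y_def)
    qed
    then have "measure L {z \<in> space L. \<exists>k\<in>{1..r0}. z k > Y} \<le> measure L {z \<in> space L. (\<Sum>k\<in>{1..r0}. \<bar>z k\<bar>) > real N1}"
    proof (rule L.finite_measure_mono)
      show "{z \<in> space L. (\<Sum>k\<in>{1..r0}. \<bar>z k\<bar>) > real N1} \<in> sets L" using msum by measurable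
    qed
    with N1 show ?thesis by simp
  qed
  define G where "G t = JL (\<lambda>k. if k = j then t else Y)" for t
  have contG: "continuous_on UNIV G"
  proof -
    have c1: "continuous_on UNIV (\<lambda>t::real. \<lambda>k::nat. if k = j then t else Y)"
    proof (rule continuous_on_coordinatewise_then_product)
      fix k show "continuous_on UNIV (\<lambda>t::real. if k = j then t else Y)"
        by (cases "k = j") (auto intro: continuous_intros)
    qed
    show ?thesis unfolding G_def JL_def
      by (rule continuous_on_compose2[OF L_cont c1]) auto
  qed
  have Gle: "G t \<le> measure L {z \<in> space L. z j \<le> t}" for t
    unfolding G_def JL_def using j setj1 by (intro L.finite_measure_mono) auto
  have Gge: "1 - G t \<le> measure L {z \<in> space L. z j > t} + \<epsilon> / 8" for t
  proof -
    have "space L - {z \<in> space L. \<forall>k\<in>{1..r0}. z k \<le> (if k = j then t else Y)}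
       \<subseteq> {z \<in> space L. z j > t} \<union> {z \<in> space L. \<exists>k\<in>{1..r0}. z k > Y}"
    proof
      fix z assume z: "z \<in> space L - {z \<in> space L. \<forall>k\<in>{1..r0}. z k \<le> (if k = j then t else Y)}"
      then obtain k where k: "k \<in> {1..r0}" "z k > (if k = j then t else Y)" by (auto simp: not_le)
      show "z \<in> {z \<in> space L. z j > t} \<union> {z \<in> space L. \<exists>k\<in>{1..r0}. z k > Y}"
      proof (cases "k = j")
        case True then show ?thesis using z k by auto
      next
        case False then show ?thesis using z k by auto
      qed
    qed
    then have "measure L (space L - {z \<in> space L. \<forall>k\<in>{1..r0}. z k \<le> (if k = j then t else Y)})
       \<le> measure L ({z \<in> space L. z j > t} \<union> {z \<in> space L. \<exists>k\<in>{1..r0}. z k > Y})"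
      using setj2 setT[of "\<lambda>_. Y"] by (intro L.finite_measure_mono) blast+
    also have "\<dots> \<le> measure L {z \<in> space L. z j > t} + measure L {z \<in> space L. \<exists>k\<in>{1..r0}. z k > Y}"
      using setj2 setT[of "\<lambda>_. Y"] by (intro measure_Un_le) blast+
    also have "measure L (space L - {z \<in> space L. \<forall>k\<in>{1..r0}. z k \<le> (if k = j then t else Y)}) = 1 - G t"
      unfolding G_def JL_def by (rule L.prob_compl[OF setA])
    finally show ?thesis
      using tailY by linarith
  qed
  obtain N2 where N2: "measure L {z \<in> space L. z j \<le> - real N2} < \<epsilon> / 2"
    using order_tendstoD(2)[OF tail_to_zero(2)[OF L.finite_measure_axioms mj], of "\<epsilon>/2"] e
    by (auto simp: eventually_sequentially)
  obtain N3 where N3: "measure L {z \<in> space L. z j > real N3} < \<epsilon> / 8"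
    using order_tendstoD(2)[OF tail_to_zero(1)[OF L.finite_measure_axioms mj] eps8]
    by (auto simp: eventually_sequentially)
  have G2: "G (- real N2) \<le> \<epsilon> / 2" using Gle[of "- real N2"] N2 by simp
  have G3: "\<epsilon> / 2 \<le> G (real N3)" using Gge[of "real N3"] N3 e by simp
  obtain s0 where s0: "G s0 = \<epsilon> / 2"
    using IVT'[OF G2 G3 _ continuous_on_subset[OF contG]] by force
  have eps8': "\<epsilon> / 8 > 0" using e by simp
  obtain \<delta> where \<delta>: "\<delta> > 0" "\<And>t. dist t s0 < \<delta> \<Longrightarrow> dist (G t) (G s0) < \<epsilon> / 8"
    using contG eps8' unfolding continuous_on_iff by (metis UNIV_I)
  define h where "h = \<delta> / 2"
  have h: "h > 0" "dist (s0 - h) s0 < \<delta>" "dist (s0 + h) s0 < \<delta>"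
    using \<delta>(1) by (auto simp: h_def dist_real_def)
  have lo: "G (s0 - h) > \<epsilon> / 4"
    using \<delta>(2)[OF h(2)] s0 unfolding dist_real_def abs_less_iff by linarith
  have hi: "G (s0 + h) < 5 * \<epsilon> / 8"
    using \<delta>(2)[OF h(3)] s0 unfolding dist_real_def abs_less_iff by linarith
  have "measure L {z \<in> space L. z j \<le> s0 + h} \<le>
      measure L ({z \<in> space L. \<forall>k\<in>{1..r0}. z k \<le> (if k = j then s0 + h else Y)} \<union> {z \<in> space L. \<exists>k\<in>{1..r0}. z k > Y})"
  proof (rule L.finite_measure_mono)
    show "{z \<in> space L. z j \<le> s0 + h} \<subseteq> {z \<in> space L. \<forall>k\<in>{1..r0}. z k \<le> (if k = j then s0 + h else Y)} \<union> {z \<in> space L. \<exists>k\<in>{1..r0}. z k > Y}"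
    proof
      fix z assume z: "z \<in> {z \<in> space L. z j \<le> s0 + h}"
      show "z \<in> {z \<in> space L. \<forall>k\<in>{1..r0}. z k \<le> (if k = j then s0 + h else Y)} \<union> {z \<in> space L. \<exists>k\<in>{1..r0}. z k > Y}"
      proof (cases "\<exists>k\<in>{1..r0}. z k > Y")
        case True then show ?thesis using z by blast
      next
        case False
        then have "\<forall>k\<in>{1..r0}. z k \<le> (if k = j then s0 + h else Y)" using z by (auto simp: not_less)
        then show ?thesis using z by blast
      qed
    qed
    show "{z \<in> space L. \<forall>k\<in>{1..r0}. z k \<le> (if k = j then s0 + h else Y)} \<union> {z \<in> space L. \<exists>k\<in>{1..r0}. z k > Y} \<in> sets L"
      using setA[of "\<lambda>k. if k = j then s0 + h else Y"] setT[of "\<lambda>_. Y"] by (rule sets.Un)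
  qed
  also have "\<dots> \<le> G (s0 + h) + measure L {z \<in> space L. \<exists>k\<in>{1..r0}. z k > Y}"
    unfolding G_def JL_def using setA[of "\<lambda>k. if k = j then s0 + h else Y"] setT[of "\<lambda>_. Y"] by (intro measure_Un_le) blast+
  finally have "measure L {z \<in> space L. z j \<le> s0 + h} < 3 * \<epsilon> / 4"
    using hi tailY by simp
  moreover have "measure L {z \<in> space L. \<forall>k\<in>{1..r0}. z k \<le> (if k = j then s0 - h else Y)} > \<epsilon> / 4"
    using lo unfolding G_def JL_def by simp
  ultimately show ?thesis using h(1) by blast
qed

definition ramp :: "real \<Rightarrow> real \<Rightarrow> real \<Rightarrow> real" where
  "ramp c w u = max 0 (min 1 ((c - u) / w))"

lemma ramp_props:
  assumes w: "w > 0"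
  shows "0 \<le> ramp c w u" "ramp c w u \<le> 1" "u \<le> c - w \<Longrightarrow> ramp c w u = 1" "c \<le> u \<Longrightarrow> ramp c w u = 0"
    "continuous_on UNIV (ramp c w)"
proof -
  show "0 \<le> ramp c w u" "ramp c w u \<le> 1" by (auto simp: ramp_def)
  show "u \<le> c - w \<Longrightarrow> ramp c w u = 1" using w by (auto simp: ramp_def field_simps)
  show "c \<le> u \<Longrightarrow> ramp c w u = 0" using w by (auto simp: ramp_def field_simps intro!: max_absorb1 min.coboundedI2 divide_nonpos_pos)
  show "continuous_on UNIV (ramp c w)" unfolding ramp_def by (intro continuous_intros) (use w in auto)
qed

lemma ramp_meas[measurable]: "ramp c w \<in> borel_measurable borel"
  unfolding ramp_def by measurable

lemma ind_int:
  assumes "{x \<in> space M. \<Phi> x} \<in> sets M" "finite_measure M"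
  shows "(\<integral>x. (if \<Phi> x then 1 else 0::real) \<partial>M) = measure M {x \<in> space M. \<Phi> x}"
proof -
  have "(\<integral>x. (if \<Phi> x then 1 else 0::real) \<partial>M) = (\<integral>x. indicator {x \<in> space M. \<Phi> x} x \<partial>M)"
    by (rule Bochner_Integration.integral_cong) (auto simp: indicator_def)
  also have "\<dots> = measure M {x \<in> space M. \<Phi> x}" by (simp add: Int_absorb2)
  finally show ?thesis .
qed

lemma weak_apply:
  fixes T :: "nat \<Rightarrow> nat \<Rightarrow> 'x \<Rightarrow> real" and r0 :: nat and f :: "(nat \<Rightarrow> real) \<Rightarrow> real"
  assumes weak: "weak_conv_vec
          (\<lambda>n. distr (P n) (PiM {1..r0} (\<lambda>_. borel)) (\<lambda>x. restrict (\<lambda>j. T n j x) {1..r0})) L"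
    and L_sets: "sets L = sets (PiM {1..r0} (\<lambda>_. borel))"
    and T_meas: "\<And>n j. j \<in> {1..r0} \<Longrightarrow> T n j \<in> borel_measurable (P n)"
    and fc: "continuous_on UNIV f" and fb: "bounded (range f)"
    and fm: "f \<in> borel_measurable (PiM {1..r0} (\<lambda>_. borel))"
  shows "(\<lambda>n. \<integral>x. f (restrict (\<lambda>j. T n j x) {1..r0}) \<partial>P n) \<longlonglongrightarrow> (\<integral>z. f z \<partial>L)"
proof -
  have fL: "f \<in> borel_measurable L"
    by (subst measurable_cong_sets[OF L_sets refl]) (rule fm)
  have "(\<lambda>n. integral\<^sup>L (distr (P n) (PiM {1..r0} (\<lambda>_. borel)) (\<lambda>x. restrict (\<lambda>j. T n j x) {1..r0})) f)
      \<longlonglongrightarrow> integral\<^sup>L L f"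
    using weak fc fb fL unfolding weak_conv_vec_def by blast
  moreover have "integral\<^sup>L (distr (P n) (PiM {1..r0} (\<lambda>_. borel)) (\<lambda>x. restrict (\<lambda>j. T n j x) {1..r0})) f
      = (\<integral>x. f (restrict (\<lambda>j. T n j x) {1..r0}) \<partial>P n)" for n
  proof (rule integral_distr)
    show "(\<lambda>x. restrict (\<lambda>j. T n j x) {1..r0}) \<in> measurable (P n) (PiM {1..r0} (\<lambda>_. borel))"
      by (rule measurable_restrict) (rule T_meas)
  qed (rule fm)
  ultimately show ?thesis by simp
qed

lemma WK:
  fixes T :: "nat \<Rightarrow> nat \<Rightarrow> 'x \<Rightarrow> real" and r0 j :: nat
  assumes weak: "weak_conv_vec
          (\<lambda>n. distr (P n) (PiM {1..r0} (\<lambda>_. borel)) (\<lambda>x. restrict (\<lambda>j. T n j x) {1..r0})) L"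
    and L_sets: "sets L = sets (PiM {1..r0} (\<lambda>_. borel))" and L_prob: "prob_space L"
    and P_prob: "\<And>n. prob_space (P n)"
    and T_meas: "\<And>n j. j \<in> {1..r0} \<Longrightarrow> T n j \<in> borel_measurable (P n)"
    and j: "j \<in> {1..r0}" and h: "h > 0"
    and lo: "measure L {z \<in> space L. \<forall>k\<in>{1..r0}. z k \<le> (if k = j then s0 - h else Y)} > a"
    and hi: "measure L {z \<in> space L. z j \<le> s0 + h} < b"
  shows "eventually (\<lambda>n. measure (P n) {x \<in> space (P n). \<forall>k\<in>{1..r0}. T n k x \<le> (if k = j then s0 else Y + 1)} > a
      \<and> measure (P n) {x \<in> space (P n). T n j x \<le> s0} < b) sequentially"
proof -
  interpret L: prob_space L by fact
  have spL: "space L = space (PiM {1..r0} (\<lambda>_. borel::real measure))"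
    by (rule sets_eq_imp_space_eq[OF L_sets])
  define yv where "yv k = (if k = j then s0 else Y + 1)" for k
  define wd where "wd k = (if k = j then h else 1)" for k :: nat
  have wd: "wd k > 0" for k using h by (simp add: wd_def)
  define flo where "flo z = (\<Prod>k\<in>{1..r0}. ramp (yv k) (wd k) (z k))" for z :: "nat \<Rightarrow> real"
  define gup where "gup z = ramp (s0 + h) h (z j)" for z :: "nat \<Rightarrow> real"
  have flo_nn: "0 \<le> flo z" for z unfolding flo_def using ramp_props(1)[OF wd] by (intro prod_nonneg) auto
  have flo_le1: "flo z \<le> 1" for z unfolding flo_def using ramp_props(1,2)[OF wd] by (intro prod_le_1) auto
  have flo_up: "flo z \<le> (if \<forall>k\<in>{1..r0}. z k \<le> yv k then 1 else 0)" for z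
  proof (cases "\<forall>k\<in>{1..r0}. z k \<le> yv k")
    case True then show ?thesis using flo_le1[of z] by simp
  next
    case False
    then obtain k where k: "k \<in> {1..r0}" "z k > yv k" by (auto simp: not_le)
    then have "ramp (yv k) (wd k) (z k) = 0" using ramp_props(4)[OF wd] by simp
    then have "flo z = 0" unfolding flo_def using k by (intro prod_zero) auto
    then show ?thesis by simp
  qed
  have flo_lo: "flo z \<ge> (if \<forall>k\<in>{1..r0}. z k \<le> (if k = j then s0 - h else Y) then 1 else 0)" for z
  proof (cases "\<forall>k\<in>{1..r0}. z k \<le> (if k = j then s0 - h else Y)")
    case True
    then have "ramp (yv k) (wd k) (z k) = 1" if "k \<in> {1..r0}" for k
      using that by (intro ramp_props(3)[OF wd]) (auto simp: yv_def wd_def split: if_splits)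
    then have "flo z = 1" unfolding flo_def by simp
    then show ?thesis by simp
  next
    case False then show ?thesis by (subst if_not_P[OF False]) (rule flo_nn)
  qed
  have gup_lo: "gup z \<ge> (if z j \<le> s0 then 1 else 0)" for z
    unfolding gup_def using ramp_props(1,3)[OF h] by auto
  have gup_up: "gup z \<le> (if z j \<le> s0 + h then 1 else 0)" for z
    unfolding gup_def using ramp_props(2,4)[OF h] by (auto simp: not_le)
  have flo_c: "continuous_on UNIV flo" unfolding flo_def
    by (intro continuous_on_prod continuous_on_compose2[OF ramp_props(5)[OF wd] continuous_on_product_coordinates]) auto
  have gup_c: "continuous_on UNIV gup" unfolding gup_def
    by (rule continuous_on_compose2[OF ramp_props(5)[OF h] continuous_on_product_coordinates]) auto
  have flo_b: "bounded (range flo)" using flo_nn flo_le1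
    by (intro boundedI[where B=1]) auto
  have gup_b: "bounded (range gup)" using ramp_props(1,2)[OF h]
    by (intro boundedI[where B=1]) (auto simp: gup_def)
  have flo_m: "flo \<in> borel_measurable (PiM {1..r0} (\<lambda>_. borel))" unfolding flo_def
    by (intro borel_measurable_prod measurable_compose[OF comp_meas ramp_meas]) auto
  have gup_m: "gup \<in> borel_measurable (PiM {1..r0} (\<lambda>_. borel))" unfolding gup_def
    by (rule measurable_compose[OF comp_meas[OF j] ramp_meas])
  have flo_mL: "flo \<in> borel_measurable L" by (subst measurable_cong_sets[OF L_sets refl]) (rule flo_m)
  have gup_mL: "gup \<in> borel_measurable L" by (subst measurable_cong_sets[OF L_sets refl]) (rule gup_m)
  have setAL: "{z \<in> space L. \<forall>k\<in>{1..r0}. z k \<le> y k} \<in> sets L" for y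
    using PiM_sets_basic(1)[where y=y] unfolding L_sets spL .
  have mjL: "(\<lambda>z. z j) \<in> borel_measurable L"
    by (subst measurable_cong_sets[OF L_sets refl]) (rule comp_meas[OF j])
  have setjL: "{z \<in> space L. z j \<le> t} \<in> sets L" for t using mjL by measurable
  have lim1: "(\<lambda>n. \<integral>x. flo (restrict (\<lambda>j. T n j x) {1..r0}) \<partial>P n) \<longlonglongrightarrow> (\<integral>z. flo z \<partial>L)"
    by (rule weak_apply[OF weak L_sets T_meas flo_c flo_b flo_m])
  have lim2: "(\<lambda>n. \<integral>x. gup (restrict (\<lambda>j. T n j x) {1..r0}) \<partial>P n) \<longlonglongrightarrow> (\<integral>z. gup z \<partial>L)"
    by (rule weak_apply[OF weak L_sets T_meas gup_c gup_b gup_m])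
  have intL1: "(\<integral>z. flo z \<partial>L) > a"
  proof -
    have "measure L {z \<in> space L. \<forall>k\<in>{1..r0}. z k \<le> (if k = j then s0 - h else Y)}
        = (\<integral>z. (if \<forall>k\<in>{1..r0}. z k \<le> (if k = j then s0 - h else Y) then 1 else 0::real) \<partial>L)"
      by (rule ind_int[symmetric]) (use setAL L.finite_measure_axioms in auto)
    also have "\<dots> \<le> (\<integral>z. flo z \<partial>L)"
    proof (rule integral_mono)
      show "integrable L flo" by (rule L.integrable_const_bound[where B=1]) (use flo_nn flo_le1 flo_mL in auto)
      show "integrable L (\<lambda>z. (if \<forall>k\<in>{1..r0}. z k \<le> (if k = j then s0 - h else Y) then 1 else 0::real))"
        by (rule L.integrable_const_bound[where B=1]) (use setAL in auto)
    qed (rule flo_lo)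
    finally show ?thesis using lo by linarith
  qed
  have intL2: "(\<integral>z. gup z \<partial>L) < b"
  proof -
    have "(\<integral>z. gup z \<partial>L) \<le> (\<integral>z. (if z j \<le> s0 + h then 1 else 0::real) \<partial>L)"
    proof (rule integral_mono)
      show "integrable L gup" by (rule L.integrable_const_bound[where B=1]) (use ramp_props(1,2)[OF h] gup_mL in \<open>auto simp: gup_def\<close>)
      show "integrable L (\<lambda>z. (if z j \<le> s0 + h then 1 else 0::real))"
        by (rule L.integrable_const_bound[where B=1]) (use setjL in auto)
    qed (rule gup_up)
    also have "\<dots> = measure L {z \<in> space L. z j \<le> s0 + h}"
      by (rule ind_int) (use setjL L.finite_measure_axioms in auto)
    finally show ?thesis using hi by linarith
  qed
  have ev1: "eventually (\<lambda>n. (\<integral>x. flo (restrict (\<lambda>j. T n j x) {1..r0}) \<partial>P n) > a) sequentially"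
    by (rule order_tendstoD(1)[OF lim1 intL1])
  have ev2: "eventually (\<lambda>n. (\<integral>x. gup (restrict (\<lambda>j. T n j x) {1..r0}) \<partial>P n) < b) sequentially"
    by (rule order_tendstoD(2)[OF lim2 intL2])
  show ?thesis
  proof (rule eventually_mono[OF eventually_conj[OF ev1 ev2]])
    fix n assume n: "a < (\<integral>x. flo (restrict (\<lambda>j. T n j x) {1..r0}) \<partial>P n) \<and> (\<integral>x. gup (restrict (\<lambda>j. T n j x) {1..r0}) \<partial>P n) < b"
    interpret Pn: prob_space "P n" by (rule P_prob)
    have rm: "(\<lambda>x. restrict (\<lambda>j. T n j x) {1..r0}) \<in> measurable (P n) (PiM {1..r0} (\<lambda>_. borel))"
      by (rule measurable_restrict) (rule T_meas)
    have Tm: "T n k \<in> borel_measurable (P n)" if "k \<in> {1..r0}" for k using T_meas that .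
    have setA: "{x \<in> space (P n). \<forall>k\<in>{1..r0}. T n k x \<le> yv k} \<in> sets (P n)"
      by (intro sets.sets_Collect_finite_All borel_measurable_le Tm borel_measurable_const) auto
    have setj: "{x \<in> space (P n). T n j x \<le> s0} \<in> sets (P n)" using Tm[OF j] by measurable
    have m1: "(\<lambda>x. flo (restrict (\<lambda>j. T n j x) {1..r0})) \<in> borel_measurable (P n)"
      by (rule measurable_compose[OF rm flo_m])
    have m2: "(\<lambda>x. gup (restrict (\<lambda>j. T n j x) {1..r0})) \<in> borel_measurable (P n)"
      by (rule measurable_compose[OF rm gup_m])
    have "(\<integral>x. flo (restrict (\<lambda>j. T n j x) {1..r0}) \<partial>P n)
        \<le> (\<integral>x. (if \<forall>k\<in>{1..r0}. T n k x \<le> yv k then 1 else 0::real) \<partial>P n)"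
    proof (rule integral_mono)
      show "integrable (P n) (\<lambda>x. flo (restrict (\<lambda>j. T n j x) {1..r0}))"
        by (rule Pn.integrable_const_bound[where B=1]) (use flo_nn flo_le1 m1 in auto)
      show "integrable (P n) (\<lambda>x. (if \<forall>k\<in>{1..r0}. T n k x \<le> yv k then 1 else 0::real))"
        by (rule Pn.integrable_const_bound[where B=1]) (use setA in auto)
      fix x show "flo (restrict (\<lambda>j. T n j x) {1..r0}) \<le> (if \<forall>k\<in>{1..r0}. T n k x \<le> yv k then 1 else 0)"
      proof -
        have eq: "(\<forall>k\<in>{1..r0}. restrict (\<lambda>j. T n j x) {1..r0} k \<le> yv k) = (\<forall>k\<in>{1..r0}. T n k x \<le> yv k)"
          by simp
        show ?thesis using flo_up[of "restrict (\<lambda>j. T n j x) {1..r0}"] unfolding eq .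
      qed
    qed
    also have "\<dots> = measure (P n) {x \<in> space (P n). \<forall>k\<in>{1..r0}. T n k x \<le> yv k}"
      by (rule ind_int) (use setA Pn.finite_measure_axioms in auto)
    finally have A1: "measure (P n) {x \<in> space (P n). \<forall>k\<in>{1..r0}. T n k x \<le> yv k} > a" using n by linarith
    have "measure (P n) {x \<in> space (P n). T n j x \<le> s0} = (\<integral>x. (if T n j x \<le> s0 then 1 else 0::real) \<partial>P n)"
      by (rule ind_int[symmetric]) (use setj Pn.finite_measure_axioms in auto)
    also have "\<dots> \<le> (\<integral>x. gup (restrict (\<lambda>j. T n j x) {1..r0}) \<partial>P n)"
    proof (rule integral_mono)
      show "integrable (P n) (\<lambda>x. gup (restrict (\<lambda>j. T n j x) {1..r0}))"
        by (rule Pn.integrable_const_bound[where B=1]) (use ramp_props(1,2)[OF h] m2 in \<open>auto simp: gup_def\<close>)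
      show "integrable (P n) (\<lambda>x. (if T n j x \<le> s0 then 1 else 0::real))"
        by (rule Pn.integrable_const_bound[where B=1]) (use setj in auto)
      fix x show "(if T n j x \<le> s0 then 1 else 0) \<le> gup (restrict (\<lambda>j. T n j x) {1..r0})"
        using gup_lo[of "restrict (\<lambda>j. T n j x) {1..r0}"] j by simp
    qed
    finally have A2: "measure (P n) {x \<in> space (P n). T n j x \<le> s0} < b" using n by linarith
    show "measure (P n) {x \<in> space (P n). \<forall>k\<in>{1..r0}. T n k x \<le> (if k = j then s0 else Y + 1)} > a
      \<and> measure (P n) {x \<in> space (P n). T n j x \<le> s0} < b"
      using A1 A2 by (simp add: yv_def)
  qed
qed

lemma BOOT:
  fixes T :: "nat \<Rightarrow> 'x \<Rightarrow> real" and Tb :: "nat \<Rightarrow> 'x \<Rightarrow> 'v \<Rightarrow> real" and r0 j :: nat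
  assumes P: "prob_space P" and Q: "prob_space Q" and x: "x \<in> space P"
    and Tbm: "\<And>k. k \<in> {1..r0} \<Longrightarrow> (\<lambda>(x, v). Tb k x v) \<in> borel_measurable (P \<Otimes>\<^sub>M Q)"
    and D: "\<not> \<bar>(SUP y :: nat \<Rightarrow> real.
              \<bar>measure Q {v \<in> space Q. \<forall>j\<in>{1..r0}. Tb j x v \<le> y j}
               - measure P {x' \<in> space P. \<forall>j\<in>{1..r0}. T j x' \<le> y j}\<bar>)\<bar> > \<eta>"
    and j: "j \<in> {1..r0}" and s0: "s0 < T j x"
  shows "measure Q {v \<in> space Q. Tb j x v \<ge> T j x}
     \<le> 1 - measure P {x' \<in> space P. \<forall>k\<in>{1..r0}. T k x' \<le> (if k = j then s0 else Y + 1)} + \<eta>"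
proof -
  interpret P: prob_space P by fact
  interpret Q: prob_space Q by fact
  define yv where "yv k = (if k = j then s0 else Y + 1)" for k :: nat
  define F where "F y = \<bar>measure Q {v \<in> space Q. \<forall>j\<in>{1..r0}. Tb j x v \<le> y j}
               - measure P {x' \<in> space P. \<forall>j\<in>{1..r0}. T j x' \<le> y j}\<bar>" for y :: "nat \<Rightarrow> real"
  have Fb: "F y \<le> 1" for y
  proof -
    have "measure Q {v \<in> space Q. \<forall>j\<in>{1..r0}. Tb j x v \<le> y j} \<le> 1" by simp
    moreover have "measure P {x' \<in> space P. \<forall>j\<in>{1..r0}. T j x' \<le> y j} \<le> 1" by simp
    moreover have "measure Q {v \<in> space Q. \<forall>j\<in>{1..r0}. Tb j x v \<le> y j} \<ge> 0" by simp
    moreover have "measure P {x' \<in> space P. \<forall>j\<in>{1..r0}. T j x' \<le> y j} \<ge> 0" by simp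
    ultimately show ?thesis unfolding F_def abs_le_iff by linarith
  qed
  have "F yv \<le> (SUP y. F y)"
    by (rule cSUP_upper) (use Fb in \<open>auto intro!: bdd_aboveI2\<close>)
  also have "(SUP y. F y) \<le> \<eta>" using D unfolding F_def by (auto simp: not_less abs_le_iff)
  finally have Fyv: "F yv \<le> \<eta>" .
  let ?Qs = "{v \<in> space Q. \<forall>k\<in>{1..r0}. Tb k x v \<le> yv k}"
  let ?Sx = "{v \<in> space Q. Tb j x v \<ge> T j x}"
  have Qs: "?Qs \<in> sets Q"
    by (intro sets.sets_Collect_finite_All section_meas(2)[OF Tbm x]) auto
  have "?Sx \<subseteq> space Q - ?Qs"
  proof
    fix v assume v: "v \<in> ?Sx"
    have "\<not> Tb j x v \<le> yv j" using v s0 by (auto simp: yv_def)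
    then show "v \<in> space Q - ?Qs" using v j by auto
  qed
  then have "measure Q ?Sx \<le> measure Q (space Q - ?Qs)"
    using Qs by (intro Q.finite_measure_mono) auto
  also have "\<dots> = 1 - measure Q ?Qs" by (rule Q.prob_compl[OF Qs])
  finally show ?thesis
    using Fyv unfolding F_def yv_def by (auto simp: abs_le_iff)
qed

lemma exp_small: fixes t :: real assumes "t > 0" shows "exp (- t) \<le> 1 / t"
proof -
  have "t \<le> exp t" using exp_ge_add_one_self[of t] by linarith
  then have "1 / exp t \<le> 1 / t" using assms by (intro divide_left_mono) auto
  then show ?thesis by (simp add: exp_minus field_simps)
qed

lemma Mn_large:
  assumes "filterlim Mn at_top sequentially"
  shows "eventually (\<lambda>n. real (Mn n) \<ge> R) sequentially"
proof -
  have "eventually (\<lambda>n. nat \<lceil>R\<rceil> \<le> Mn n) sequentially"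
    using assms unfolding filterlim_at_top by blast
  then show ?thesis
  proof (rule eventually_mono)
    fix n assume "nat \<lceil>R\<rceil> \<le> Mn n"
    then have "real (nat \<lceil>R\<rceil>) \<le> real (Mn n)" by simp
    moreover have "R \<le> real (nat \<lceil>R\<rceil>)" by linarith
    ultimately show "R \<le> real (Mn n)" by linarith
  qed
qed

lemma NULL:
  fixes r0 j :: nat
    and P :: "nat \<Rightarrow> 'x measure" and Q :: "nat \<Rightarrow> 'v measure"
    and Tstat :: "nat \<Rightarrow> nat \<Rightarrow> 'x \<Rightarrow> real" and Tb :: "nat \<Rightarrow> nat \<Rightarrow> 'x \<Rightarrow> 'v \<Rightarrow> real"
    and Mn :: "nat \<Rightarrow> nat" and L :: "(nat \<Rightarrow> real) measure"
  assumes P_prob: "\<And>n. prob_space (P n)"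
    and Q_prob: "\<And>n. prob_space (Q n)"
    and T_meas: "\<And>n j. j \<in> {1..r0} \<Longrightarrow> Tstat n j \<in> borel_measurable (P n)"
    and Tb_meas: "\<And>n j. j \<in> {1..r0} \<Longrightarrow> (\<lambda>(x, v). Tb n j x v) \<in> borel_measurable (P n \<Otimes>\<^sub>M Q n)"
    and M_lim: "filterlim Mn at_top sequentially"
    and L_prob: "prob_space L"
    and L_sets: "sets L = sets (PiM {1..r0} (\<lambda>_. borel))"
    and L_cont_cdf: "continuous_on UNIV
          (\<lambda>y :: nat \<Rightarrow> real. measure L {z \<in> space L. \<forall>j\<in>{1..r0}. z j \<le> y j})"
    and weak: "weak_conv_vec
          (\<lambda>n. distr (P n) (PiM {1..r0} (\<lambda>_. borel)) (\<lambda>x. restrict (\<lambda>j. Tstat n j x) {1..r0})) L"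
    and boot_unif: "tends_to_zero_in_prob P
          (\<lambda>n x. (SUP y :: nat \<Rightarrow> real.
              \<bar>measure (Q n) {v \<in> space (Q n). \<forall>j\<in>{1..r0}. Tb n j x v \<le> y j}
               - measure (P n) {x' \<in> space (P n). \<forall>j\<in>{1..r0}. Tstat n j x' \<le> y j}\<bar>))"
    and j: "j \<in> {1..r0}" and e: "0 < \<epsilon>" "\<epsilon> \<le> 1"
  shows "\<exists>a. 0 < a \<and> a < 1 \<and> eventually (\<lambda>n. measure (P n \<Otimes>\<^sub>M PiM {1..Mn n} (\<lambda>_. Q n))
        {(x, vs) \<in> space (P n \<Otimes>\<^sub>M PiM {1..Mn n} (\<lambda>_. Q n)).
           boot_pval (Mn n) (\<lambda>k. Tb n j x (vs k)) (Tstat n j x) > a} \<le> \<epsilon>) sequentially"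
proof -
  have "\<exists>s0 Y h. 0 < h \<and>
     measure L {z \<in> space L. \<forall>k\<in>{1..r0}. z k \<le> (if k = j then s0 - h else Y)} > \<epsilon> / 4 \<and>
     measure L {z \<in> space L. z j \<le> s0 + h} < 3 * \<epsilon> / 4"
    by (rule L_lemma[OF L_prob L_sets L_cont_cdf j e])
  then obtain s0 Y h where H: "0 < h \<and>
     measure L {z \<in> space L. \<forall>k\<in>{1..r0}. z k \<le> (if k = j then s0 - h else Y)} > \<epsilon> / 4 \<and>
     measure L {z \<in> space L. z j \<le> s0 + h} < 3 * \<epsilon> / 4"
    by (elim exE) (rule that)
  note h = conjunct1[OF H]
  note lo = conjunct1[OF conjunct2[OF H]]
  note hi = conjunct2[OF conjunct2[OF H]]
  have ev1: "eventually (\<lambda>n. measure (P n) {x \<in> space (P n). \<forall>k\<in>{1..r0}. Tstat n k x \<le> (if k = j then s0 else Y + 1)} > \<epsilon> / 4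
      \<and> measure (P n) {x \<in> space (P n). Tstat n j x \<le> s0} < 3 * \<epsilon> / 4) sequentially"
    using WK[OF weak L_sets L_prob P_prob T_meas j h lo hi] by assumption
  have e8: "\<epsilon> / 8 > 0" using e by simp
  obtain A where AA: "(\<forall>n. A n \<in> sets (P n) \<and> {x \<in> space (P n). \<bar>(SUP y :: nat \<Rightarrow> real.
              \<bar>measure (Q n) {v \<in> space (Q n). \<forall>j\<in>{1..r0}. Tb n j x v \<le> y j}
               - measure (P n) {x' \<in> space (P n). \<forall>j\<in>{1..r0}. Tstat n j x' \<le> y j}\<bar>)\<bar> > \<epsilon> / 8} \<subseteq> A n)
     \<and> (\<lambda>n. measure (P n) (A n)) \<longlonglongrightarrow> 0"
    using boot_unif[unfolded tends_to_zero_in_prob_def, rule_format, OF e8] by (elim exE) (rule that)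
  have A: "\<And>n. A n \<in> sets (P n)"
    "\<And>n. {x \<in> space (P n). \<bar>(SUP y :: nat \<Rightarrow> real.
              \<bar>measure (Q n) {v \<in> space (Q n). \<forall>j\<in>{1..r0}. Tb n j x v \<le> y j}
               - measure (P n) {x' \<in> space (P n). \<forall>j\<in>{1..r0}. Tstat n j x' \<le> y j}\<bar>)\<bar> > \<epsilon> / 8} \<subseteq> A n"
    using conjunct1[OF AA] by auto
  have Alim: "(\<lambda>n. measure (P n) (A n)) \<longlonglongrightarrow> 0" using conjunct2[OF AA] .
  have ev2: "eventually (\<lambda>n. measure (P n) (A n) < \<epsilon> / 8) sequentially"
    by (rule order_tendstoD(2)[OF Alim e8])
  define Mb where "Mb = max 1 (1024 / \<epsilon> ^ 3)"
  have ev3: "eventually (\<lambda>n. real (Mn n) \<ge> Mb) sequentially" by (rule Mn_large[OF M_lim])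
  define a where "a = 1 - \<epsilon> / 16"
  define b where "b = 1 - \<epsilon> / 8"
  have a: "0 < a" "a < 1" using e by (auto simp: a_def)
  have EV: "eventually (\<lambda>n. measure (P n \<Otimes>\<^sub>M PiM {1..Mn n} (\<lambda>_. Q n))
        {(x, vs) \<in> space (P n \<Otimes>\<^sub>M PiM {1..Mn n} (\<lambda>_. Q n)).
           boot_pval (Mn n) (\<lambda>k. Tb n j x (vs k)) (Tstat n j x) > a} \<le> \<epsilon>) sequentially"
  proof (rule eventually_mono[OF eventually_conj[OF ev1 eventually_conj[OF ev2 ev3]]])
    fix n assume n: "(measure (P n) {x \<in> space (P n). \<forall>k\<in>{1..r0}. Tstat n k x \<le> (if k = j then s0 else Y + 1)} > \<epsilon> / 4
      \<and> measure (P n) {x \<in> space (P n). Tstat n j x \<le> s0} < 3 * \<epsilon> / 4)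
      \<and> (measure (P n) (A n) < \<epsilon> / 8 \<and> real (Mn n) \<ge> Mb)"
    interpret Pn: prob_space "P n" by (rule P_prob)
    let ?m = "Mn n"
    define B where "B = A n \<union> {x \<in> space (P n). Tstat n j x \<le> s0}"
    have setj: "{x \<in> space (P n). Tstat n j x \<le> s0} \<in> sets (P n)" using T_meas[OF j] by measurable
    have B: "B \<in> sets (P n)" unfolding B_def using A(1) setj by (rule sets.Un)
    have m1: "real ?m \<ge> 1" using n by (simp add: Mb_def)
    then have m1': "?m \<ge> 1" by simp
    have mb: "real ?m \<ge> 1024 / \<epsilon> ^ 3" using n by (simp add: Mb_def)
    define ee where "ee = a * (real ?m + 1) - 1/2 - real ?m * b"
    have "ee = 1/2 - \<epsilon>/16 + real ?m * \<epsilon> / 16" unfolding ee_def a_def b_def by (simp add: field_simps)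
    then have ee: "ee \<ge> real ?m * \<epsilon> / 16" using e by linarith
    have "real ?m * \<epsilon> / 16 \<ge> 0" using e by simp
    then have ee0: "ee \<ge> 0" using ee by linarith
    have qb: "measure (Q n) {v \<in> space (Q n). Tb n j x v \<ge> Tstat n j x} \<le> b"
      if x: "x \<in> space (P n)" "x \<notin> B" for x
    proof -
      have nA: "x \<notin> A n" and s: "s0 < Tstat n j x" using x unfolding B_def by auto
      have D: "\<not> \<bar>(SUP y :: nat \<Rightarrow> real.
              \<bar>measure (Q n) {v \<in> space (Q n). \<forall>j\<in>{1..r0}. Tb n j x v \<le> y j}
               - measure (P n) {x' \<in> space (P n). \<forall>j\<in>{1..r0}. Tstat n j x' \<le> y j}\<bar>)\<bar> > \<epsilon> / 8"
      proof
        assume H: "\<bar>(SUP y :: nat \<Rightarrow> real.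
              \<bar>measure (Q n) {v \<in> space (Q n). \<forall>j\<in>{1..r0}. Tb n j x v \<le> y j}
               - measure (P n) {x' \<in> space (P n). \<forall>j\<in>{1..r0}. Tstat n j x' \<le> y j}\<bar>)\<bar> > \<epsilon> / 8"
        have "x \<in> {x \<in> space (P n). \<bar>(SUP y :: nat \<Rightarrow> real.
              \<bar>measure (Q n) {v \<in> space (Q n). \<forall>j\<in>{1..r0}. Tb n j x v \<le> y j}
               - measure (P n) {x' \<in> space (P n). \<forall>j\<in>{1..r0}. Tstat n j x' \<le> y j}\<bar>)\<bar> > \<epsilon> / 8}"
          using x(1) H by (intro CollectI conjI)
        with A(2)[of n] nA show False by (meson subsetD)
      qed
      have "measure (Q n) {v \<in> space (Q n). Tb n j x v \<ge> Tstat n j x}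
        \<le> 1 - measure (P n) {x' \<in> space (P n). \<forall>k\<in>{1..r0}. Tstat n k x' \<le> (if k = j then s0 else Y + 1)} + \<epsilon> / 8"
        by (rule BOOT[OF P_prob Q_prob x(1) Tb_meas D j s])
      then show ?thesis using n unfolding b_def by linarith
    qed
    have F1: "measure (P n \<Otimes>\<^sub>M PiM {1..?m} (\<lambda>_. Q n))
        {(x, vs) \<in> space (P n \<Otimes>\<^sub>M PiM {1..?m} (\<lambda>_. Q n)). boot_pval ?m (\<lambda>k. Tb n j x (vs k)) (Tstat n j x) > a}
      \<le> measure (P n) B + exp (- 2 * ee\<^sup>2 / real ?m)"
    proof -
      have ef: "0 \<le> a * (real ?m + 1) - 1 / 2 - real ?m * b" using ee0 unfolding ee_def .
      show ?thesis
        using null_one_n[OF P_prob Q_prob T_meas[OF j] Tb_meas[OF j] B m1' ef qb] unfolding ee_def .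
    qed
    have F2: "measure (P n) B \<le> measure (P n) (A n) + measure (P n) {x \<in> space (P n). Tstat n j x \<le> s0}"
      unfolding B_def using A(1) setj by (intro measure_Un_le)
    have F3: "exp (- 2 * ee\<^sup>2 / real ?m) \<le> \<epsilon> / 8"
    proof -
      define t where "t = real ?m * \<epsilon>\<^sup>2 / 128"
      have t0: "t > 0" using m1 e by (simp add: t_def)
      have "(real ?m * \<epsilon> / 16)\<^sup>2 \<le> ee\<^sup>2"
        using ee e by (intro power_mono) auto
      then have "t \<le> 2 * ee\<^sup>2 / real ?m"
        using m1 by (simp add: t_def field_simps power2_eq_square)
      then have "exp (- 2 * ee\<^sup>2 / real ?m) \<le> exp (- t)" by simp
      also have "\<dots> \<le> 1 / t" by (rule exp_small[OF t0])
      also have "1 / t \<le> \<epsilon> / 8"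
      proof -
        have "8 / \<epsilon> \<le> t"
        proof -
          have "1024 / \<epsilon> ^ 3 * (\<epsilon>\<^sup>2 / 128) = 8 / \<epsilon>" using e by (simp add: field_simps power3_eq_cube power2_eq_square)
          moreover have "1024 / \<epsilon> ^ 3 * (\<epsilon>\<^sup>2 / 128) \<le> real ?m * (\<epsilon>\<^sup>2 / 128)"
            using mb by (intro mult_right_mono) auto
          ultimately show ?thesis by (simp add: t_def)
        qed
        then show ?thesis using e t0 by (simp add: field_simps)
      qed
      finally show ?thesis .
    qed
    show "measure (P n \<Otimes>\<^sub>M PiM {1..?m} (\<lambda>_. Q n))
        {(x, vs) \<in> space (P n \<Otimes>\<^sub>M PiM {1..?m} (\<lambda>_. Q n)). boot_pval ?m (\<lambda>k. Tb n j x (vs k)) (Tstat n j x) > a} \<le> \<epsilon>"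
      using n F1 F2 F3 by linarith
  qed
  show ?thesis using a EV by blast
qed

lemma ALT:
  fixes P :: "nat \<Rightarrow> 'x measure" and Q :: "nat \<Rightarrow> 'v measure"
    and Tstat :: "nat \<Rightarrow> nat \<Rightarrow> 'x \<Rightarrow> real" and Tb :: "nat \<Rightarrow> nat \<Rightarrow> 'x \<Rightarrow> 'v \<Rightarrow> real"
    and Mn :: "nat \<Rightarrow> nat" and j :: nat
  assumes P_prob: "\<And>n. prob_space (P n)"
    and Q_prob: "\<And>n. prob_space (Q n)"
    and T_meas: "\<And>n. Tstat n j \<in> borel_measurable (P n)"
    and Tb_meas: "\<And>n. (\<lambda>(x, v). Tb n j x v) \<in> borel_measurable (P n \<Otimes>\<^sub>M Q n)"
    and M_lim: "filterlim Mn at_top sequentially"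
    and alt: "(\<lambda>n. measure (P n \<Otimes>\<^sub>M Q n) {(x, v) \<in> space (P n \<Otimes>\<^sub>M Q n). Tb n j x v \<ge> Tstat n j x})
            \<longlonglongrightarrow> 0"
    and \<beta>: "0 < \<beta>" and e: "0 < \<epsilon>"
  shows "eventually (\<lambda>n. measure (P n \<Otimes>\<^sub>M PiM {1..Mn n} (\<lambda>_. Q n))
        {(x, vs) \<in> space (P n \<Otimes>\<^sub>M PiM {1..Mn n} (\<lambda>_. Q n)).
           boot_pval (Mn n) (\<lambda>k. Tb n j x (vs k)) (Tstat n j x) > \<beta>} \<le> \<epsilon>) sequentially"
proof -
  have eb: "\<epsilon> * \<beta> / 2 > 0" using e \<beta> by simp
  have ev1: "eventually (\<lambda>n. measure (P n \<Otimes>\<^sub>M Q n) {(x, v) \<in> space (P n \<Otimes>\<^sub>M Q n). Tb n j x v \<ge> Tstat n j x} < \<epsilon> * \<beta> / 2) sequentially"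
    by (rule order_tendstoD(2)[OF alt eb])
  have ev2: "eventually (\<lambda>n. real (Mn n) \<ge> 1 / \<beta>) sequentially" by (rule Mn_large[OF M_lim])
  show ?thesis
  proof (rule eventually_mono[OF eventually_conj[OF ev1 ev2]])
    fix n assume n: "measure (P n \<Otimes>\<^sub>M Q n) {(x, v) \<in> space (P n \<Otimes>\<^sub>M Q n). Tb n j x v \<ge> Tstat n j x} < \<epsilon> * \<beta> / 2
       \<and> real (Mn n) \<ge> 1 / \<beta>"
    let ?m = "Mn n"
    let ?\<pi> = "measure (P n \<Otimes>\<^sub>M Q n) {(x, v) \<in> space (P n \<Otimes>\<^sub>M Q n). Tb n j x v \<ge> Tstat n j x}"
    have bm: "\<beta> * real ?m \<ge> 1" using n \<beta> by (simp add: field_simps)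
    have m0: "0 < Mn n" using bm by (cases "Mn n = 0") auto
    have d: "\<beta> * (real ?m + 1) - 1/2 \<ge> \<beta> * real ?m / 2" using bm \<beta> by (simp add: algebra_simps)
    have d0: "\<beta> * (real ?m + 1) - 1/2 > 0" using d bm by linarith
    have F1: "measure (P n \<Otimes>\<^sub>M PiM {1..?m} (\<lambda>_. Q n))
        {(x, vs) \<in> space (P n \<Otimes>\<^sub>M PiM {1..?m} (\<lambda>_. Q n)). boot_pval ?m (\<lambda>k. Tb n j x (vs k)) (Tstat n j x) > \<beta>}
      \<le> real ?m / (\<beta> * (real ?m + 1) - 1/2) * ?\<pi>"
      using alt_one_n[OF P_prob Q_prob T_meas Tb_meas d0] .
    have C: "real ?m / (\<beta> * (real ?m + 1) - 1/2) \<le> 2 / \<beta>"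
    proof -
      have "real ?m / (\<beta> * (real ?m + 1) - 1/2) \<le> real ?m / (\<beta> * real ?m / 2)"
        using d bm \<beta> m0 by (intro divide_left_mono) auto
      also have "\<dots> = 2 / \<beta>" using m0 \<beta> by (auto simp: field_simps)
      finally show ?thesis .
    qed
    have "real ?m / (\<beta> * (real ?m + 1) - 1/2) * ?\<pi> \<le> 2 / \<beta> * ?\<pi>"
      using C by (intro mult_right_mono) auto
    also have "\<dots> \<le> 2 / \<beta> * (\<epsilon> * \<beta> / 2)" using n \<beta> by (intro mult_left_mono) auto
    also have "\<dots> = \<epsilon>" using \<beta> by simp
    finally show "measure (P n \<Otimes>\<^sub>M PiM {1..?m} (\<lambda>_. Q n))
        {(x, vs) \<in> space (P n \<Otimes>\<^sub>M PiM {1..?m} (\<lambda>_. Q n)). boot_pval ?m (\<lambda>k. Tb n j x (vs k)) (Tstat n j x) > \<beta>} \<le> \<epsilon>"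
      using F1 by linarith
  qed
qed

lemma boot_pval_bounds:
  "boot_pval m tb t \<ge> 1 / (2 * (real m + 1))" "boot_pval m tb t \<le> 1 - 1 / (2 * (real m + 1))"
proof -
  have "(\<Sum>k\<in>{1..m}. if tb k \<ge> t then 1 else 0::real) \<le> (\<Sum>k\<in>{1..m}. 1)"
    by (rule sum_mono) auto
  then have le: "(\<Sum>k\<in>{1..m}. if tb k \<ge> t then 1 else 0::real) \<le> real m" by simp
  have ge: "(\<Sum>k\<in>{1..m}. if tb k \<ge> t then 1 else 0::real) \<ge> 0" by (rule sum_nonneg) auto
  show "boot_pval m tb t \<ge> 1 / (2 * (real m + 1))" unfolding boot_pval_def using ge by (simp add: field_simps)
  define S where "S = (\<Sum>k\<in>{1..m}. if tb k \<ge> t then 1 else 0::real)"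
  have "(1 / (real m + 1)) * (1 / 2 + S) \<le> (1 / (real m + 1)) * (real m + 1 / 2)"
    using le unfolding S_def by (intro mult_left_mono) auto
  also have "(1 / (real m + 1)) * (real m + 1 / 2) = 1 - 1 / (2 * (real m + 1))"
    by (simp add: field_simps)
  finally show "boot_pval m tb t \<le> 1 - 1 / (2 * (real m + 1))" unfolding boot_pval_def S_def .
qed

lemma phi_clamp_meas:
  fixes \<phi> :: "real \<Rightarrow> real"
  assumes phi_decr: "\<And>x y. x \<in> {0<..<1} \<Longrightarrow> y \<in> {0<..<1} \<Longrightarrow> x \<le> y \<Longrightarrow> \<phi> y \<le> \<phi> x"
    and d: "0 < d" "d \<le> 1/2"
  shows "(\<lambda>t. \<phi> (min (max t d) (1 - d))) \<in> borel_measurable borel"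
proof -
  have "mono (\<lambda>t. - \<phi> (min (max t d) (1 - d)))"
  proof (rule monoI)
    fix s t :: real assume "s \<le> t"
    then have "min (max s d) (1 - d) \<le> min (max t d) (1 - d)" by simp
    moreover have "min (max s d) (1 - d) \<in> {0<..<1}" "min (max t d) (1 - d) \<in> {0<..<1}" using d by auto
    ultimately show "- \<phi> (min (max s d) (1 - d)) \<le> - \<phi> (min (max t d) (1 - d))"
      using phi_decr by auto
  qed
  then have "(\<lambda>t. - \<phi> (min (max t d) (1 - d))) \<in> borel_measurable borel" by (rule borel_measurable_mono)
  then have "(\<lambda>t. - (- \<phi> (min (max t d) (1 - d)))) \<in> borel_measurable borel" by measurable
  then show ?thesis by simp
qed

lemma Ev_meas:
  fixes T :: "nat \<Rightarrow> 'x \<Rightarrow> real" and Tb :: "nat \<Rightarrow> 'x \<Rightarrow> 'v \<Rightarrow> real" and \<phi> :: "real \<Rightarrow> real"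
  assumes T_meas: "\<And>j. j \<in> {1..r} \<Longrightarrow> T j \<in> borel_measurable P"
    and Tb_meas: "\<And>j. j \<in> {1..r} \<Longrightarrow> (\<lambda>(x, v). Tb j x v) \<in> borel_measurable (P \<Otimes>\<^sub>M Q)"
    and phi_decr: "\<And>x y. x \<in> {0<..<1} \<Longrightarrow> y \<in> {0<..<1} \<Longrightarrow> x \<le> y \<Longrightarrow> \<phi> y \<le> \<phi> x"
  shows "{(x, vs) \<in> space (P \<Otimes>\<^sub>M PiM {1..m} (\<lambda>_. Q)).
      (\<Sum>j\<in>{1..r}. w j * \<phi> (boot_pval m (\<lambda>k. Tb j x (vs k)) (T j x))) > K}
    \<in> sets (P \<Otimes>\<^sub>M PiM {1..m} (\<lambda>_. Q))"
proof -
  let ?M = "P \<Otimes>\<^sub>M PiM {1..m} (\<lambda>_. Q)"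
  define d where "d = 1 / (2 * (real m + 1))"
  have d: "0 < d" "d \<le> 1/2" by (auto simp: d_def field_simps)
  define \<phi>n where "\<phi>n t = \<phi> (min (max t d) (1 - d))" for t
  have \<phi>nm: "\<phi>n \<in> borel_measurable borel" unfolding \<phi>n_def by (rule phi_clamp_meas[OF phi_decr d])
  define cnt where "cnt j = (\<lambda>(x, vs). (\<Sum>k\<in>{1..m}. if Tb j x (vs k) \<ge> T j x then 1 else 0::real))" for j
  have cntm: "cnt j \<in> borel_measurable ?M" if "j \<in> {1..r}" for j
    unfolding cnt_def by (rule Eset_meas[OF T_meas[OF that] Tb_meas[OF that]])
  define f where "f z = (\<Sum>j\<in>{1..r}. w j * \<phi>n ((1 / (real m + 1)) * (1 / 2 + cnt j z)))" for z
  have fm: "f \<in> borel_measurable ?M"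
    unfolding f_def
    by (intro borel_measurable_sum borel_measurable_times borel_measurable_const
        measurable_compose[OF _ \<phi>nm] borel_measurable_add cntm) auto
  have eq: "(\<Sum>j\<in>{1..r}. w j * \<phi> (boot_pval m (\<lambda>k. Tb j x (vs k)) (T j x))) = f (x, vs)" for x vs
  proof -
    have "\<phi> (boot_pval m (\<lambda>k. Tb j x (vs k)) (T j x)) = \<phi>n ((1 / (real m + 1)) * (1 / 2 + cnt j (x, vs)))" for j
    proof -
      have b: "d \<le> boot_pval m (\<lambda>k. Tb j x (vs k)) (T j x)" "boot_pval m (\<lambda>k. Tb j x (vs k)) (T j x) \<le> 1 - d"
        using boot_pval_bounds unfolding d_def by auto
      have "(1 / (real m + 1)) * (1 / 2 + cnt j (x, vs)) = boot_pval m (\<lambda>k. Tb j x (vs k)) (T j x)"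
        unfolding cnt_def boot_pval_def by simp
      then show ?thesis unfolding \<phi>n_def using b by simp
    qed
    then show ?thesis unfolding f_def by simp
  qed
  have "{(x, vs) \<in> space ?M. (\<Sum>j\<in>{1..r}. w j * \<phi> (boot_pval m (\<lambda>k. Tb j x (vs k)) (T j x))) > K}
      = {z \<in> space ?M. f z > K}"
    using eq by auto
  also have "\<dots> \<in> sets ?M" using fm by measurable
  finally show ?thesis .
qed

lemma Bad_meas:
  fixes T :: "'x \<Rightarrow> real" and Tb :: "'x \<Rightarrow> 'v \<Rightarrow> real"
  assumes T: "T \<in> borel_measurable P" and Tb: "(\<lambda>(x, v). Tb x v) \<in> borel_measurable (P \<Otimes>\<^sub>M Q)"
  shows "{(x, vs) \<in> space (P \<Otimes>\<^sub>M PiM {1..m} (\<lambda>_. Q)). boot_pval m (\<lambda>k. Tb x (vs k)) (T x) > c}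
     \<in> sets (P \<Otimes>\<^sub>M PiM {1..m} (\<lambda>_. Q))"
proof -
  let ?R = "PiM {1..m} (\<lambda>_. Q)"
  let ?d = "c * (real m + 1) - 1/2"
  have cntm: "(\<lambda>(x, vs). (\<Sum>k\<in>{1..m}. if Tb x (vs k) \<ge> T x then 1 else 0::real)) \<in> borel_measurable (P \<Otimes>\<^sub>M ?R)"
    by (rule Eset_meas[OF T Tb])
  have Eeq: "{(x, vs) \<in> space (P \<Otimes>\<^sub>M ?R). boot_pval m (\<lambda>k. Tb x (vs k)) (T x) > c}
     = {p \<in> space (P \<Otimes>\<^sub>M ?R). (\<lambda>(x, vs). (\<Sum>k\<in>{1..m}. if Tb x (vs k) \<ge> T x then 1 else 0::real)) p > ?d}"
    by (auto simp: boot_pval_gt_iff)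
  show ?thesis unfolding Eeq using cntm by measurable
qed

theorem mainTheorem9:
  fixes r r0 :: nat
    and P :: "nat \<Rightarrow> 'x measure"        \<comment> \<open>distribution of the data X_n\<close>
    and Q :: "nat \<Rightarrow> 'v measure"        \<comment> \<open>distribution of the resampling randomness V_n^[i]\<close>
    and Tstat :: "nat \<Rightarrow> nat \<Rightarrow> 'x \<Rightarrow> real"   \<comment> \<open>T_{n,j} = Tstat n j X_n\<close>
    and Tb :: "nat \<Rightarrow> nat \<Rightarrow> 'x \<Rightarrow> 'v \<Rightarrow> real" \<comment> \<open>T_{n,j}^[i] = Tb n j X_n V_n^[i]\<close>
    and H0 :: "nat \<Rightarrow> bool"
    and Mn :: "nat \<Rightarrow> nat"
    and psi :: "(nat \<Rightarrow> real) \<Rightarrow> real"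
    and w :: "nat \<Rightarrow> real"
    and \<phi> :: "real \<Rightarrow> real"
    and L :: "(nat \<Rightarrow> real) measure"
  assumes P_prob: "\<And>n. prob_space (P n)"
    and Q_prob: "\<And>n. prob_space (Q n)"
    and T_meas: "\<And>n j. j \<in> {1..r} \<Longrightarrow> Tstat n j \<in> borel_measurable (P n)"
    and Tb_meas: "\<And>n j. j \<in> {1..r} \<Longrightarrow> (\<lambda>(x, v). Tb n j x v) \<in> borel_measurable (P n \<Otimes>\<^sub>M Q n)"
    and M_lim: "filterlim Mn at_top sequentially"
    and psi_def: "\<And>p. psi p = (\<Sum>j\<in>{1..r}. w j * \<phi> (p j))"
    and w_pos: "\<And>j. j \<in> {1..r} \<Longrightarrow> w j > 0"
    and phi_decr: "\<And>x y. x \<in> {0<..<1} \<Longrightarrow> y \<in> {0<..<1} \<Longrightarrow> x \<le> y \<Longrightarrow> \<phi> y \<le> \<phi> x"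
    and phi_nonneg: "\<And>p. p \<in> {0<..<1/2} \<Longrightarrow> \<phi> p \<ge> 0"
    and phi_bij: "bij_betw \<phi> {0<..<1} (UNIV :: real set)"
    and r0_range: "r0 \<in> {1..r - 1}"
    and H0_true: "\<And>j. j \<in> {1..r0} \<Longrightarrow> H0 j"
    and L_prob: "prob_space L"
    and L_sets: "sets L = sets (PiM {1..r0} (\<lambda>_. borel))"
    and L_cont_cdf: "continuous_on UNIV
          (\<lambda>y :: nat \<Rightarrow> real. measure L {z \<in> space L. \<forall>j\<in>{1..r0}. z j \<le> y j})"
    and weak: "weak_conv_vec
          (\<lambda>n. distr (P n) (PiM {1..r0} (\<lambda>_. borel)) (\<lambda>x. restrict (\<lambda>j. Tstat n j x) {1..r0})) L"
    and boot_unif: "tends_to_zero_in_prob P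
          (\<lambda>n x. (SUP y :: nat \<Rightarrow> real.
              \<bar>measure (Q n) {v \<in> space (Q n). \<forall>j\<in>{1..r0}. Tb n j x v \<le> y j}
               - measure (P n) {x' \<in> space (P n). \<forall>j\<in>{1..r0}. Tstat n j x' \<le> y j}\<bar>))"
    and H0_false: "\<And>j. j \<in> {r0+1..r} \<Longrightarrow> \<not> H0 j"
    and alt: "\<And>j. j \<in> {r0+1..r} \<Longrightarrow>
          (\<lambda>n. measure (P n \<Otimes>\<^sub>M Q n) {(x, v) \<in> space (P n \<Otimes>\<^sub>M Q n). Tb n j x v \<ge> Tstat n j x})
            \<longlonglongrightarrow> 0"
  shows "\<forall>K :: real.
     (\<lambda>n. measure (P n \<Otimes>\<^sub>M PiM {1..Mn n} (\<lambda>_. Q n))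
        {(x, vs) \<in> space (P n \<Otimes>\<^sub>M PiM {1..Mn n} (\<lambda>_. Q n)).
           psi (\<lambda>j. boot_pval (Mn n) (\<lambda>k. Tb n j x (vs k)) (Tstat n j x)) > K})
     \<longlonglongrightarrow> 1"
proof -
  let ?\<mu> = "\<lambda>n. P n \<Otimes>\<^sub>M PiM {1..Mn n} (\<lambda>_. Q n)"
  define bad where "bad n j c = measure (?\<mu> n) {(x, vs) \<in> space (?\<mu> n).
           boot_pval (Mn n) (\<lambda>k. Tb n j x (vs k)) (Tstat n j x) > c}" for n j c
  have r0: "1 \<le> r0" "r0 < r" using r0_range by auto
  have T_meas0: "\<And>n j. j \<in> {1..r0} \<Longrightarrow> Tstat n j \<in> borel_measurable (P n)"
    using T_meas r0 by auto
  have Tb_meas0: "\<And>n j. j \<in> {1..r0} \<Longrightarrow> (\<lambda>(x, v). Tb n j x v) \<in> borel_measurable (P n \<Otimes>\<^sub>M Q n)"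
    using Tb_meas r0 by auto
  have mu_prob: "prob_space (?\<mu> n)" for n
  proof -
    interpret PQ: product_prob_space "\<lambda>_. Q n" "{1..Mn n}"
      using Q_prob by (simp add: product_prob_space_def product_prob_space_axioms_def product_sigma_finite_def prob_space_imp_sigma_finite)
    show ?thesis by (intro prob_space_pair P_prob PQ.P.prob_space_axioms)
  qed
  have LOWER: "eventually (\<lambda>n. measure (?\<mu> n)
        {(x, vs) \<in> space (?\<mu> n). psi (\<lambda>j. boot_pval (Mn n) (\<lambda>k. Tb n j x (vs k)) (Tstat n j x)) > K} \<ge> 1 - \<epsilon>) sequentially"
    if e: "0 < \<epsilon>" "\<epsilon> \<le> 1" for \<epsilon> K
  proof -
    define \<epsilon>' where "\<epsilon>' = \<epsilon> / real r"
    have e': "0 < \<epsilon>'" "\<epsilon>' \<le> 1" using e r0 by (auto simp: \<epsilon>'_def field_simps)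
    have "\<forall>j\<in>{1..r0}. \<exists>a. 0 < a \<and> a < 1 \<and> eventually (\<lambda>n. bad n j a \<le> \<epsilon>') sequentially"
    proof
      fix j assume j: "j \<in> {1..r0}"
      show "\<exists>a. 0 < a \<and> a < 1 \<and> eventually (\<lambda>n. bad n j a \<le> \<epsilon>') sequentially"
        using NULL[OF P_prob Q_prob T_meas0 Tb_meas0 M_lim L_prob L_sets L_cont_cdf weak boot_unif j e']
        unfolding bad_def .
    qed
    then obtain aa where aa: "\<And>j. j \<in> {1..r0} \<Longrightarrow> 0 < aa j \<and> aa j < 1 \<and> eventually (\<lambda>n. bad n j (aa j) \<le> \<epsilon>') sequentially"
      by metis
    define C0 where "C0 = (\<Sum>j\<in>{1..r0}. w j * \<phi> (aa j))"
    define Walt where "Walt = (\<Sum>j\<in>{r0+1..r}. w j)"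
    have Walt: "Walt > 0" unfolding Walt_def using r0 w_pos by (intro sum_pos) auto
    define B where "B = (K - C0) / Walt + 1"
    have "B \<in> \<phi> ` {0<..<1}" using phi_bij unfolding bij_betw_def by auto
    then obtain \<beta> where \<beta>: "\<beta> \<in> {0<..<1}" "\<phi> \<beta> = B" by auto
    define cc where "cc j = (if j \<le> r0 then aa j else \<beta>)" for j
    have cc: "cc j \<in> {0<..<1}" if "j \<in> {1..r}" for j
      using aa[of j] \<beta>(1) that by (auto simp: cc_def)
    have ev: "eventually (\<lambda>n. \<forall>j\<in>{1..r}. bad n j (cc j) \<le> \<epsilon>') sequentially"
    proof (rule eventually_ball_finite)
      show "finite {1..r}" by simp
      show "\<forall>j\<in>{1..r}. eventually (\<lambda>n. bad n j (cc j) \<le> \<epsilon>') sequentially"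
      proof
        fix j assume j: "j \<in> {1..r}"
        show "eventually (\<lambda>n. bad n j (cc j) \<le> \<epsilon>') sequentially"
        proof (cases "j \<le> r0")
          case True
          then show ?thesis using aa[of j] j by (auto simp: cc_def)
        next
          case False
          then have j2: "j \<in> {r0+1..r}" using j by auto
          have "eventually (\<lambda>n. bad n j \<beta> \<le> \<epsilon>') sequentially"
            unfolding bad_def
            by (rule ALT[where P=P and Q=Q and Tstat=Tstat and Tb=Tb and Mn=Mn and j=j, OF P_prob Q_prob T_meas[OF j] Tb_meas[OF j] M_lim alt[OF j2]]) (use \<beta>(1) e' in auto)
          then show ?thesis using False by (simp add: cc_def)
        qed
      qed
    qed
    show ?thesis
    proof (rule eventually_mono[OF ev])
      fix n assume H: "\<forall>j\<in>{1..r}. bad n j (cc j) \<le> \<epsilon>'"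
      interpret MU: prob_space "?\<mu> n" by (rule mu_prob)
      let ?Sp = "space (?\<mu> n)"
      let ?p = "\<lambda>j x vs. boot_pval (Mn n) (\<lambda>k. Tb n j x (vs k)) (Tstat n j x)"
      let ?Ev = "{(x, vs) \<in> ?Sp. psi (\<lambda>j. ?p j x vs) > K}"
      let ?Bad = "\<lambda>j. {(x, vs) \<in> ?Sp. ?p j x vs > cc j}"
      have Ev_eq: "?Ev = {(x, vs) \<in> ?Sp. (\<Sum>j\<in>{1..r}. w j * \<phi> (?p j x vs)) > K}"
        by (simp add: psi_def)
      have Ev: "?Ev \<in> sets (?\<mu> n)"
        unfolding Ev_eq by (rule Ev_meas[OF T_meas Tb_meas phi_decr])
      have Badm: "?Bad j \<in> sets (?\<mu> n)" if "j \<in> {1..r}" for j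
        by (rule Bad_meas[OF T_meas[OF that] Tb_meas[OF that]])
      have sub: "?Sp - ?Ev \<subseteq> (\<Union>j\<in>{1..r}. ?Bad j)"
      proof
        fix z assume z: "z \<in> ?Sp - ?Ev"
        obtain x vs where zxv: "z = (x, vs)" by (cases z)
        show "z \<in> (\<Union>j\<in>{1..r}. ?Bad j)"
        proof (rule ccontr)
          assume "z \<notin> (\<Union>j\<in>{1..r}. ?Bad j)"
          then have le: "?p j x vs \<le> cc j" if "j \<in> {1..r}" for j
            using z that zxv by (auto simp: not_less)
          have "(\<Sum>j\<in>{1..r}. w j * \<phi> (cc j)) \<le> (\<Sum>j\<in>{1..r}. w j * \<phi> (?p j x vs))"
          proof (rule sum_mono)
            fix j assume j: "j \<in> {1..r}"
            have "\<phi> (cc j) \<le> \<phi> (?p j x vs)"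
              using phi_decr[OF _ cc[OF j] le[OF j]] boot_pval_range[of "Mn n" "\<lambda>k. Tb n j x (vs k)" "Tstat n j x"]
              by auto
            then show "w j * \<phi> (cc j) \<le> w j * \<phi> (?p j x vs)"
              using w_pos[OF j] by (intro mult_left_mono) auto
          qed
          moreover have "(\<Sum>j\<in>{1..r}. w j * \<phi> (cc j)) = C0 + Walt * B"
          proof -
            have un: "{1..r} = {1..r0} \<union> {r0+1..r}" using r0 by auto
            have "(\<Sum>j\<in>{1..r}. w j * \<phi> (cc j)) = (\<Sum>j\<in>{1..r0}. w j * \<phi> (cc j)) + (\<Sum>j\<in>{r0+1..r}. w j * \<phi> (cc j))"
              unfolding un by (rule sum.union_disjoint) auto
            also have "(\<Sum>j\<in>{1..r0}. w j * \<phi> (cc j)) = C0"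
              unfolding C0_def by (rule sum.cong) (auto simp: cc_def)
            also have "(\<Sum>j\<in>{r0+1..r}. w j * \<phi> (cc j)) = (\<Sum>j\<in>{r0+1..r}. w j * B)"
              by (rule sum.cong) (auto simp: cc_def \<beta>(2))
            also have "\<dots> = Walt * B" unfolding Walt_def by (simp add: sum_distrib_right)
            finally show ?thesis .
          qed
          moreover have "C0 + Walt * B > K"
          proof -
            have "Walt * B = (K - C0) + Walt" unfolding B_def using Walt by (simp add: field_simps)
            then show ?thesis using Walt by linarith
          qed
          ultimately have "psi (\<lambda>j. ?p j x vs) > K" by (simp add: psi_def)
          then have "z \<in> ?Ev" using z zxv by auto
          then show False using z by blast
        qed
      qed
      have "measure (?\<mu> n) (?Sp - ?Ev) \<le> measure (?\<mu> n) (\<Union>j\<in>{1..r}. ?Bad j)"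
        using sub Badm by (intro MU.finite_measure_mono) auto
      also have "\<dots> \<le> (\<Sum>j\<in>{1..r}. measure (?\<mu> n) (?Bad j))"
        using Badm by (intro MU.finite_measure_subadditive_finite) auto
      also have "\<dots> \<le> (\<Sum>j\<in>{1..r}. \<epsilon>')"
        using H by (intro sum_mono) (simp add: bad_def)
      also have "\<dots> = \<epsilon>" using r0 by (simp add: \<epsilon>'_def)
      finally have "measure (?\<mu> n) (?Sp - ?Ev) \<le> \<epsilon>" .
      moreover have "measure (?\<mu> n) (?Sp - ?Ev) = 1 - measure (?\<mu> n) ?Ev" by (rule MU.prob_compl[OF Ev])
      ultimately show "measure (?\<mu> n) ?Ev \<ge> 1 - \<epsilon>" by linarith
    qed
  qed
  show ?thesis
  proof
    fix K :: real
    show "(\<lambda>n. measure (?\<mu> n)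
        {(x, vs) \<in> space (?\<mu> n). psi (\<lambda>j. boot_pval (Mn n) (\<lambda>k. Tb n j x (vs k)) (Tstat n j x)) > K})
     \<longlonglongrightarrow> 1"
    proof (rule order_tendstoI)
      fix a :: real assume a: "a > 1"
      show "eventually (\<lambda>n. measure (?\<mu> n)
        {(x, vs) \<in> space (?\<mu> n). psi (\<lambda>j. boot_pval (Mn n) (\<lambda>k. Tb n j x (vs k)) (Tstat n j x)) > K} < a) sequentially"
      proof (rule always_eventually, rule allI)
        fix n
        interpret MU: prob_space "?\<mu> n" by (rule mu_prob)
        show "measure (?\<mu> n)
          {(x, vs) \<in> space (?\<mu> n). psi (\<lambda>j. boot_pval (Mn n) (\<lambda>k. Tb n j x (vs k)) (Tstat n j x)) > K} < a"
          using MU.prob_le_1 a by (meson le_less_trans)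
      qed
    next
      fix a :: real assume a: "a < 1"
      define \<epsilon> where "\<epsilon> = min ((1 - a) / 2) 1"
      have e: "0 < \<epsilon>" "\<epsilon> \<le> 1" "1 - \<epsilon> > a" using a unfolding \<epsilon>_def min_def by (auto simp: field_simps)
      show "eventually (\<lambda>n. a < measure (?\<mu> n)
        {(x, vs) \<in> space (?\<mu> n). psi (\<lambda>j. boot_pval (Mn n) (\<lambda>k. Tb n j x (vs k)) (Tstat n j x)) > K}) sequentially"
        using LOWER[OF e(1,2), of K] by (rule eventually_mono) (use e(3) in linarith)
    qed
  qed
qed

end
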